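(* Let $q\in(0,1)$ and let $\ell^1(h)$ be the $L^1$-algebra associated with the little $q$-Legendre polynomials $(R_n(x;q))_{n\in\mathbb{N}_0}$. Then the linear span of the idempotents of $\ell^1(h)$ is dense in $\ell^1(h)$.
   Context: For $q\in(0,1)$, the little $q$-Legendre polynomials are defined by $R_0(x;q)=1$, $R_1(x;q)=(x-b_0)/a_0$ and $R_1(x;q)R_n(x;q)=a_nR_{n+1}(x;q)+b_nR_n(x;q)+c_nR_{n-1}(x;q)$ for $n\ge1$, where $a_0=\frac{1}{q+1}$, $b_0=\frac{q}{q+1}$, and for $n\ge1$: $a_n=q^n\frac{(1+q)(1-q^{n+1})}{(1-q^{2n+1})(1+q^{n+1})}$, $c_n=q^n\frac{(1+q)(1-q^n)}{(1-q^{2n+1})(1+q^n)}$, $b_n=1-a_n-c_n$. One has linearization formulas $R_m(x;q)R_n(x;q)=\sum_{k=|m-n|}^{m+n}g(m,n;k)R_k(x;q)$ with $g(m,n;k)\ge0$ (and $\sum_k g(m,n;k)=1$). Let $h(n)=\frac{1}{q^n}\frac{1-q^{2n+1}}{1-q}$ (equivalently $h(n)=1/g(n,n;0)$). For $f:\mathbb{N}_0\to\mathbb{C}$ and $n\in\mathbb{N}_0$ let $T_nf(m)=\sum_{k=|m-n|}^{m+n}g(m,n;k)f(k)$. The space $\ell^1(h)=\{f:\mathbb{N}_0\to\mathbb{C}:\|f\|_1=\sum_k|f(k)|h(k)<\infty\}$ with the convolution $f\ast g(n)=\sum_{k=0}^\infty T_nf(k)g(k)h(k)$ and involution given by complex conjugation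 is a commutative Banach $\ast$-algebra with unit $\delta_0$ (the $L^1$-algebra). An idempotent is $f\in\ell^1(h)$ with $f\ast f=f$. *)

theory Defs
  imports "HOL-Analysis.Analysis" "HOL-Computational_Algebra.Polynomial"
begin

definition lqa :: "real \<Rightarrow> nat \<Rightarrow> real" where
  "lqa q n = (if n = 0 then 1 / (q + 1)
     else q ^ n * ((1 + q) * (1 - q ^ (n + 1))) / ((1 - q ^ (2 * n + 1)) * (1 + q ^ (n + 1))))"

definition lqc :: "real \<Rightarrow> nat \<Rightarrow> real" where
  "lqc q n = (if n = 0 then 0
     else q ^ n * ((1 + q) * (1 - q ^ n)) / ((1 - q ^ (2 * n + 1)) * (1 + q ^ n)))"

definition lqb :: "real \<Rightarrow> nat \<Rightarrow> real" where
  "lqb q n = (if n = 0 then q / (q + 1) else 1 - lqa q n - lqc q n)"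

fun lqR :: "real \<Rightarrow> nat \<Rightarrow> real poly" where
  "lqR q 0 = 1"
| "lqR q (Suc 0) = smult (1 / lqa q 0) [:- lqb q 0, 1:]"
| "lqR q (Suc (Suc n)) =
     smult (1 / lqa q (Suc n))
       (lqR q 1 * lqR q (Suc n) - smult (lqb q (Suc n)) (lqR q (Suc n))
          - smult (lqc q (Suc n)) (lqR q n))"

definition lqg :: "real \<Rightarrow> nat \<Rightarrow> nat \<Rightarrow> nat \<Rightarrow> real" where
  "lqg q m n = (THE c. (\<forall>k > m + n. c k = 0) \<and>
       lqR q m * lqR q n = (\<Sum>k\<le>m + n. smult (c k) (lqR q k)))"

definition lqh :: "real \<Rightarrow> nat \<Rightarrow> real" where
  "lqh q n = (1 / q ^ n) * ((1 - q ^ (2 * n + 1)) / (1 - q))"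

definition absdiff :: "nat \<Rightarrow> nat \<Rightarrow> nat" where
  "absdiff m n = (if n \<le> m then m - n else n - m)"

definition lqT :: "real \<Rightarrow> nat \<Rightarrow> (nat \<Rightarrow> complex) \<Rightarrow> nat \<Rightarrow> complex" where
  "lqT q n f m = (\<Sum>k = absdiff m n..m + n. complex_of_real (lqg q m n k) * f k)"

definition l1h :: "real \<Rightarrow> (nat \<Rightarrow> complex) set" where
  "l1h q = {f. summable (\<lambda>k. norm (f k) * lqh q k)}"

definition norm1 :: "real \<Rightarrow> (nat \<Rightarrow> complex) \<Rightarrow> real" where
  "norm1 q f = (\<Sum>k. norm (f k) * lqh q k)"

definition lqconv :: "real \<Rightarrow> (nat \<Rightarrow> complex) \<Rightarrow> (nat \<Rightarrow> complex) \<Rightarrow> nat \<Rightarrow> complex" where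
  "lqconv q f g n = (\<Sum>k. lqT q n f k * g k * complex_of_real (lqh q k))"

definition idempotent_l1 :: "real \<Rightarrow> (nat \<Rightarrow> complex) \<Rightarrow> bool" where
  "idempotent_l1 q f \<longleftrightarrow> f \<in> l1h q \<and> lqconv q f f = f"

end

theory Submission
  imports Defs
begin

lemma ratid0:
  fixes q Q K D1 D2 D3 D4 :: real
  assumes "q \<noteq> 0" "Q \<noteq> 0" "K \<noteq> 0" "D1 \<noteq> 0" "D2 \<noteq> 0" "D3 \<noteq> 0" "D4 \<noteq> 0"
  shows "(Q*(1+q)*(1-q*Q)/(D1*D2)) * ((-q*K/D4^2) * ((1-Q*K*q)*(1-Q*K*q*q)/(q*K*Q))) - 
    ((Q*(1+q)*(1-q*Q)/(D1*D2) + Q*(1+q)*(1-Q)/(D1*D3)) * ((-q*K/D4^2) * ((K-Q)*(1-Q*K*q)/(Q*K))) - (1+q) - (Q*(1+q)*(1-Q)/(D1*D3)) * ((-q*K/D4^2) * ((K-Q)*(q*K-Q)/(Q*K))))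
   = - (1+q) * ((1-q*Q)*D3*(1-Q*K*q)*(1-Q*K*q*q) - q*((1-q*Q)*D3+(1-Q)*D2)*(K-Q)*(1-Q*K*q) - D4^2*D1*D2*D3 + q*(1-Q)*D2*(K-Q)*(q*K-Q)) / (D1*D2*D3*D4^2)"
  using assms by (simp add: field_simps)

lemma ratid:
  fixes q Q K :: real
  assumes "q \<noteq> 0" "Q \<noteq> 0" "K \<noteq> 0" "1 - q*Q*Q \<noteq> 0" "1 + q*Q \<noteq> 0" "1 + Q \<noteq> 0" "1 - q*K \<noteq> 0"
  shows "(Q*(1+q)*(1-q*Q)/((1-q*Q*Q)*(1+q*Q))) * ((-q*K/(1-q*K)^2) * ((1-Q*K*q)*(1-Q*K*q*q)/(q*K*Q))) = 
    (Q*(1+q)*(1-q*Q)/((1-q*Q*Q)*(1+q*Q)) + Q*(1+q)*(1-Q)/((1-q*Q*Q)*(1+Q))) * ((-q*K/(1-q*K)^2) * ((K-Q)*(1-Q*K*q)/(Q*K))) - (1+q) - (Q*(1+q)*(1-Q)/((1-q*Q*Q)*(1+Q))) * ((-q*K/(1-q*K)^2) * ((K-Q)*(q*K-Q)/(Q*K)))"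
proof -
  have P: "(1-q*Q)*(1+Q)*(1-Q*K*q)*(1-Q*K*q*q) - q*((1-q*Q)*(1+Q)+(1-Q)*(1+q*Q))*(K-Q)*(1-Q*K*q) - (1-q*K)^2*(1-q*Q*Q)*(1+q*Q)*(1+Q) + q*(1-Q)*(1+q*Q)*(K-Q)*(q*K-Q) = 0"
    by algebra
  show ?thesis using ratid0[OF assms, unfolded P] by simp
qed

locale lqp =
  fixes q :: real
  assumes q0: "0 < q" and q1: "q < 1"
begin

abbreviation R :: "nat \<Rightarrow> real \<Rightarrow> real" where "R n x \<equiv> poly (lqR q n) x"

lemma qne[simp]: "q \<noteq> 0" using q0 by simp
lemma qpos[simp]: "0 < q ^ n" using q0 by simp
lemma qnz[simp]: "q ^ n \<noteq> 0" using q0 by simp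
lemma qle1: "q ^ n \<le> 1" using q0 q1 by (simp add: power_le_one)
lemma qlt1: assumes "0 < n" shows "q ^ n < 1"
proof -
  obtain k where "n = Suc k" using assms by (cases n) auto
  then have "q ^ n = q * q ^ k" by simp
  also have "\<dots> \<le> q" using q0 qle1[of k] by (simp add: mult_left_le)
  finally show ?thesis using q1 by simp
qed

lemma R0[simp]: "R 0 x = 1" by simp
lemma R1: "R 1 x = (q+1)*x - q"
  using q0 by (simp add: lqa_def lqb_def field_simps)

lemma lqa_pos: "0 < lqa q m"
proof (cases "m = 0")
  case True then show ?thesis using q0 by (simp add: lqa_def)
next
  case False
  have "q^(m+1) < 1" "q^(2*m+1) < 1" using qlt1[of "m+1"] qlt1[of "2*m+1"] by auto
  then have a: "q * q^m < 1" "q * q^(2*m) < 1" by auto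
  have "0 < q ^ m * ((1 + q) * (1 - q * q ^ m))" using a q0 by (intro mult_pos_pos) auto
  moreover have "0 < 1 + q * q ^ m" using mult_pos_pos[OF q0 qpos[of m]] by linarith
  then have "0 < ((1 - q * q ^ (2 * m)) * (1 + q * q ^ m))" using a q0 by (intro mult_pos_pos) auto
  ultimately show ?thesis using False by (simp add: lqa_def)
qed

lemma Rrec: assumes "m \<ge> 1"
  shows "lqa q m * R (Suc m) x = (R 1 x - lqb q m) * R m x - lqc q m * R (m-1) x"
proof -
  obtain n where m: "m = Suc n" using assms by (cases m) auto
  have "lqa q m \<noteq> 0" using lqa_pos by (metis less_irrefl)
  then show ?thesis unfolding m by (simp add: field_simps)
qed

definition lam :: "nat \<Rightarrow> real" where "lam n = (1 - q^n) * (1 - q^(n+1)) / q^n"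

lemma lam_diff: "lam a - lam b = (1/q^a - 1/q^b) * (1 - q^(a+b+1))"
  unfolding lam_def by (simp add: power_add field_simps)

lemma lam0[simp]: "lam 0 = 0" by (simp add: lam_def)

definition U :: "nat \<Rightarrow> nat \<Rightarrow> real" where "U m k = (\<Prod>i<k. 1/q^m - 1/q^i)"
definition V :: "nat \<Rightarrow> nat \<Rightarrow> real" where "V m k = (\<Prod>i<k. 1 - q^(m+i+1))"
definition Ek :: "nat \<Rightarrow> real" where "Ek k = (\<Prod>i<k. - (q^(i+1)) / (1 - q^(i+1))^2)"
definition cc :: "nat \<Rightarrow> nat \<Rightarrow> real" where "cc n k = Ek k * U n k * V n k"

lemma U_Suc: "U m (Suc k) = U m k * (1/q^m - 1/q^k)" by (simp add: U_def)
lemma V_Suc: "V m (Suc k) = V m k * (1 - q^(m+k+1))" by (simp add: V_def)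
lemma Ek_Suc: "Ek (Suc k) = Ek k * (- (q^(k+1)) / (1 - q^(k+1))^2)" by (simp add: Ek_def)
lemma U0[simp]: "U m 0 = 1" by (simp add: U_def)
lemma V0[simp]: "V m 0 = 1" by (simp add: V_def)
lemma Ek0[simp]: "Ek 0 = 1" by (simp add: Ek_def)

lemma U_zero: "m < k \<Longrightarrow> U m k = 0"
  unfolding U_def by (rule prod_zero) auto

lemma cc_zero: "n < k \<Longrightarrow> cc n k = 0" by (simp add: cc_def U_zero)

lemma U_up: "U (Suc m) (Suc k) = (1/q^(k+1)) * (1/q^m - q) * U m k"
proof (induction k)
  case 0 then show ?case by (simp add: U_def field_simps)
next
  case (Suc k)
  have "U (Suc m) (Suc (Suc k)) = U (Suc m) (Suc k) * (1/q^(Suc m) - 1/q^(Suc k))" by (rule U_Suc)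
  also have "\<dots> = (1/q^(k+1)) * (1/q^m - q) * U m k * (1/q^(Suc m) - 1/q^(Suc k))" using Suc by simp
  also have "\<dots> = (1/q^(Suc k+1)) * (1/q^m - q) * (U m k * (1/q^m - 1/q^k))"
    using q0 by (simp add: field_simps)
  finally show ?case by (simp add: U_Suc)
qed

lemma U_down: "U m k * (1/q^(Suc m) - 1) = q^k * U (Suc m) k * (1/q^(Suc m) - 1/q^k)"
proof (induction k)
  case 0 then show ?case by simp
next
  case (Suc k)
  have "U m (Suc k) * (1/q^(Suc m) - 1) = (U m k * (1/q^(Suc m) - 1)) * (1/q^m - 1/q^k)"
    by (simp add: U_Suc)
  also have "\<dots> = q^k * U (Suc m) k * (1/q^(Suc m) - 1/q^k) * (1/q^m - 1/q^k)" using Suc by simp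
  also have "\<dots> = q^(Suc k) * (U (Suc m) k * (1/q^(Suc m) - 1/q^k)) * (1/q^(Suc m) - 1/q^(Suc k))"
    using q0 by (simp add: field_simps)
  finally show ?case by (simp add: U_Suc)
qed

lemma V_up: "V (Suc m) (Suc k) * (1 - q^(m+1)) = V m k * (1 - q^(m+k+1)) * (1 - q^(m+k+2))"
proof (induction k)
  case 0 then show ?case by (simp add: V_def)
next
  case (Suc k)
  have "V (Suc m) (Suc (Suc k)) * (1 - q^(m+1)) = (V (Suc m) (Suc k) * (1 - q^(m+1))) * (1 - q^(Suc m + Suc k + 1))"
    by (simp add: V_Suc)
  also have "\<dots> = V m k * (1 - q^(m+k+1)) * (1 - q^(m+k+2)) * (1 - q^(Suc m + Suc k + 1))" using Suc by simp
  finally show ?case by (simp add: V_Suc)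
qed

lemma V_down: "V m k * (1 - q^(m+1+k)) = (1 - q^(m+1)) * V (Suc m) k"
proof (induction k)
  case 0 then show ?case by simp
next
  case (Suc k)
  have "V m (Suc k) * (1 - q^(m+1+Suc k)) = (V m k * (1 - q^(m+1+k))) * (1 - q^(m+1+Suc k))"
    by (simp add: V_Suc)
  also have "\<dots> = (1 - q^(m+1)) * V (Suc m) k * (1 - q^(m+1+Suc k))" using Suc by simp
  finally show ?case by (simp add: V_Suc)
qed

lemma abc_sum: "m \<ge> 1 \<Longrightarrow> 1 - lqb q m = lqa q m + lqc q m"
  by (simp add: lqb_def)

lemma q2m: "q^(2*m+1) = q*q^m*q^m" by (simp add: mult_2 power_add)
lemma lqa_form: "m \<ge> 1 \<Longrightarrow> lqa q m = q^m*(1+q)*(1-q*q^m)/((1-q*q^m*q^m)*(1+q*q^m))"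
  unfolding lqa_def q2m by (simp add: mult.assoc)
lemma lqc_form: "m \<ge> 1 \<Longrightarrow> lqc q m = q^m*(1+q)*(1-q^m)/((1-q*q^m*q^m)*(1+q^m))"
  unfolding lqc_def q2m by (simp add: mult.assoc)

lemma ccrec:
  assumes m: "m \<ge> 1"
  shows "lqa q m * cc (Suc m) k = (1 - lqb q m) * cc m k - (if k = 0 then 0 else (1+q) * cc m (k-1)) - lqc q m * cc (m-1) k"
proof (cases k)
  case 0 then show ?thesis using m by (simp add: cc_def abc_sum)
next
  case (Suc k')
  obtain p where mp: "m = Suc p" using m by (cases m) auto
  define Q where "Q = q^m"
  define K where "K = q^k'"
  define X where "X = cc m k'"
  define e where "e = -q*K/(1-q*K)^2"
  have Q0: "0 < Q" "Q < 1" using qlt1[of m] m by (auto simp: Q_def)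
  have K0: "0 < K" "K \<le> 1" using qle1[of k'] by (auto simp: K_def)
  have qK: "q*K < 1" using mult_left_le[of K q] K0 q0 q1 by linarith
  have qQ: "q*Q < 1" using mult_left_le[of Q q] Q0 q0 q1 by linarith
  have "q*Q*Q \<le> q*Q" using Q0 q0 by (intro mult_left_le) auto
  then have qQQ: "q*Q*Q < 1" using qQ by linarith
  have e_def': "Ek (Suc k') = Ek k' * e" by (simp add: Ek_Suc e_def K_def)
  have h2: "cc m (Suc k') = X * (e * ((K-Q)*(1-Q*K*q)/(Q*K)))"
    unfolding X_def cc_def e_def' U_Suc V_Suc using Q0 K0
    by (simp add: Q_def[symmetric] K_def[symmetric] power_add field_simps)
  have Uu: "U (Suc m) (Suc k') = (1/(q*K)) * (1/Q - q) * U m k'"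
    using U_up[of m k'] by (simp add: Q_def K_def)
  have Vu: "V (Suc m) (Suc k') = V m k' * (1-Q*K*q)*(1-Q*K*q*q) / (1 - q*Q)"
  proof -
    have "1 - q*Q \<noteq> 0" using qQ by simp
    moreover have "V (Suc m) (Suc k') * (1 - q*Q) = V m k' * (1-Q*K*q)*(1-Q*K*q*q)"
      using V_up[of m k'] by (simp add: Q_def K_def power_add mult.commute mult.left_commute)
    ultimately show ?thesis by (simp add: field_simps)
  qed
  have h3: "cc (Suc m) (Suc k') = X * (e * ((1-Q*K*q)*(1-Q*K*q*q)/(q*K*Q)))"
  proof -
    have "1 - q*Q \<noteq> 0" using qQ by simp
    then show ?thesis unfolding X_def cc_def e_def' Uu Vu using Q0 K0
      by (simp add: field_simps)
  qed
  have Ud: "U p (Suc k') = q*K * U m k' * (1/Q - 1/K) * (1/Q - 1/(q*K)) / (1/Q - 1)"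
  proof -
    have "1/Q - 1 \<noteq> 0" using Q0 by (simp add: field_simps)
    moreover have "U p (Suc k') * (1/Q - 1) = q*K * U m k' * (1/Q - 1/K) * (1/Q - 1/(q*K))"
      using U_down[of p "Suc k'"] by (simp add: mp[symmetric] Q_def K_def U_Suc)
    ultimately show ?thesis by (simp add: field_simps)
  qed
  have Vd: "V p (Suc k') = (1 - Q) * V m k'"
  proof -
    have "1 - q^(m+k'+1) \<noteq> 0" using qlt1[of "m+k'+1"] by simp
    moreover have "V p (Suc k') * (1 - q^(m+k'+1)) = (1 - Q) * V m k' * (1 - q^(m+k'+1))"
      using V_down[of p "Suc k'"] by (simp add: mp[symmetric] Q_def V_Suc)
    ultimately show ?thesis by simp
  qed
  have h4: "cc p (Suc k') = X * (e * ((K-Q)*(q*K-Q)/(Q*K)))"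
  proof -
    have "1/Q - 1 \<noteq> 0" using Q0 by (simp add: field_simps)
    then show ?thesis unfolding X_def cc_def e_def' Ud Vd using Q0 K0
      by (simp add: field_simps)
  qed
  have ra: "lqa q m = Q*(1+q)*(1-q*Q)/((1-q*Q*Q)*(1+q*Q))" using lqa_form[OF m] by (simp add: Q_def)
  have rc: "lqc q m = Q*(1+q)*(1-Q)/((1-q*Q*Q)*(1+Q))" using lqc_form[OF m] by (simp add: Q_def)
  have R: "(Q*(1+q)*(1-q*Q)/((1-q*Q*Q)*(1+q*Q))) * ((-q*K/(1-q*K)^2) * ((1-Q*K*q)*(1-Q*K*q*q)/(q*K*Q))) = 
    (Q*(1+q)*(1-q*Q)/((1-q*Q*Q)*(1+q*Q)) + Q*(1+q)*(1-Q)/((1-q*Q*Q)*(1+Q))) * ((-q*K/(1-q*K)^2) * ((K-Q)*(1-Q*K*q)/(Q*K))) - (1+q) - (Q*(1+q)*(1-Q)/((1-q*Q*Q)*(1+Q))) * ((-q*K/(1-q*K)^2) * ((K-Q)*(q*K-Q)/(Q*K)))"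
    by (rule ratid) (use Q0 K0 qK qQQ qQ mult_pos_pos[OF q0 Q0(1)] in auto)
  define A' where "A' = e * ((1-Q*K*q)*(1-Q*K*q*q)/(q*K*Q))"
  define B' where "B' = e * ((K-Q)*(1-Q*K*q)/(Q*K))"
  define C' where "C' = e * ((K-Q)*(q*K-Q)/(Q*K))"
  have R': "lqa q m * A' = (lqa q m + lqc q m) * B' - (1+q) - lqc q m * C'"
    using R unfolding ra rc e_def A'_def B'_def C'_def by simp
  have "lqa q m * cc (Suc m) k = X * (lqa q m * A')"
    using h3 Suc by (simp add: A'_def)
  also have "\<dots> = X * ((lqa q m + lqc q m) * B' - (1+q) - lqc q m * C')"
    using R' by simp
  also have "\<dots> = (lqa q m + lqc q m) * (X * B') - (1+q) * X - lqc q m * (X * C')"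
    by (simp add: algebra_simps)
  also have "\<dots> = (1 - lqb q m) * cc m k - (if k = 0 then 0 else (1+q) * cc m (k-1)) - lqc q m * cc (m-1) k"
    using h2 h4 Suc mp abc_sum[OF m] by (simp add: X_def B'_def C'_def)
  finally show ?thesis .
qed

lemma cc_n0[simp]: "cc n 0 = 1" by (simp add: cc_def)

lemma cc_sum_ext: "n \<le> N \<Longrightarrow> (\<Sum>k\<le>N. cc n k * t^k) = (\<Sum>k\<le>n. cc n k * t^k)"
  by (rule sum.mono_neutral_right) (auto simp: cc_zero)

lemma cc11: "cc 1 1 = -(1+q)"
proof -
  have nz: "1 - q \<noteq> 0" using q1 by simp
  have e: "Ek 1 = -q/((1-q)*(1-q))" by (simp add: Ek_def power2_eq_square)
  have u: "U 1 1 = (1-q)/q" by (simp add: U_def field_simps)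
  have v: "V 1 1 = (1-q)*(1+q)" by (simp add: V_def power2_eq_square algebra_simps)
  have gen: "\<And>x::real. x \<noteq> 0 \<Longrightarrow> (-q/(x*x))*(x/q)*(x*(1+q)) = -(1+q)"
    by (simp add: field_simps)
  show ?thesis unfolding cc_def e u v using gen[OF nz] .
qed

lemma tform: "R n (1 - t) = (\<Sum>k\<le>n. cc n k * t^k)"
proof (induction n rule: less_induct)
  case (less n)
  show ?case
  proof (cases "n \<le> 1")
    case True
    then consider "n = 0" | "n = 1" by linarith
    then show ?thesis
    proof cases
      case 1 then show ?thesis by simp
    next
      case 2
      have a: "R (Suc 0) (1-t) = (q+1)*(1-t) - q" using R1 by simp
      have b: "cc (Suc 0) (Suc 0) = -(1+q)" using cc11 by simp
      show ?thesis unfolding 2 One_nat_def by (simp del: lqR.simps add: a b algebra_simps)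
    qed
  next
    case False
    then obtain m where n: "n = Suc m" and m: "m \<ge> 1" by (cases n) auto
    have IH1: "R m (1-t) = (\<Sum>k\<le>Suc m. cc m k * t^k)"
      using less.IH[of m] n cc_sum_ext[of m "Suc m" t] by simp
    have IH2: "R (m-1) (1-t) = (\<Sum>k\<le>Suc m. cc (m-1) k * t^k)"
      using less.IH[of "m-1"] n m cc_sum_ext[of "m-1" "Suc m" t] by simp
    have sh: "(\<Sum>k\<le>Suc m. (if k = 0 then 0 else (1+q) * cc m (k-1)) * t^k) = (1+q) * t * (\<Sum>k\<le>Suc m. cc m k * t^k)"
    proof -
      have "(\<Sum>k\<le>Suc m. (if k = 0 then 0 else (1+q) * cc m (k-1)) * t^k) = (\<Sum>k\<le>m. (1+q) * cc m k * t^(Suc k))"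
        by (subst sum.atMost_Suc_shift) simp
      also have "\<dots> = (1+q) * t * (\<Sum>k\<le>m. cc m k * t^k)"
        by (simp add: sum_distrib_left algebra_simps)
      finally show ?thesis using cc_sum_ext[of m "Suc m" t] by simp
    qed
    have "lqa q m * (\<Sum>k\<le>Suc m. cc (Suc m) k * t^k) = (\<Sum>k\<le>Suc m. lqa q m * cc (Suc m) k * t^k)"
      unfolding sum_distrib_left by (simp only: mult.assoc)
    also have "\<dots> = (\<Sum>k\<le>Suc m. (1 - lqb q m) * (cc m k * t^k) - (if k = 0 then 0 else (1+q) * cc m (k-1)) * t^k - lqc q m * (cc (m-1) k * t^k))"
      by (rule sum.cong) (simp_all add: ccrec[OF m] algebra_simps)
    also have "\<dots> = (1 - lqb q m) * (\<Sum>k\<le>Suc m. cc m k * t^k) - (1+q) * t * (\<Sum>k\<le>Suc m. cc m k * t^k) - lqc q m * (\<Sum>k\<le>Suc m. cc (m-1) k * t^k)"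
      by (simp del: sum.atMost_Suc add: sum_subtractf sum_distrib_left sh)
    also have "\<dots> = ((1-(1+q)*t) - lqb q m) * R m (1-t) - lqc q m * R (m-1) (1-t)"
      unfolding IH1 IH2 by (simp del: sum.atMost_Suc lqR.simps add: algebra_simps)
    also have "\<dots> = (R 1 (1-t) - lqb q m) * R m (1-t) - lqc q m * R (m-1) (1-t)"
      unfolding R1 by (simp add: algebra_simps)
    also have "\<dots> = lqa q m * R (Suc m) (1-t)" using Rrec[OF m] by simp
    finally have "lqa q m * (\<Sum>k\<le>Suc m. cc (Suc m) k * t^k) = lqa q m * R (Suc m) (1-t)" .
    then show ?thesis using lqa_pos[of m] n by simp
  qed
qed

end


lemma gen_I0:
  fixes q Q D1 D2 D3 :: real
  assumes "D1 \<noteq> 0" "D2 \<noteq> 0" "D3 \<noteq> 0" "D1 = 1 - q*Q*Q" "D2 = 1 + q*Q" "D3 = 1 + Q"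
  shows "(Q*(1+q)*(1-q*Q)/(D1*D2)) * (Q * D2) + (Q*(1+q)*(1-Q)/(D1*D3)) * D3 = Q*(1+q)"
proof -
  have "(Q*(1+q)*(1-q*Q)/(D1*D2)) * (Q * D2) + (Q*(1+q)*(1-Q)/(D1*D3)) * D3 = Q*(1+q)*(Q*(1-q*Q) + (1-Q))/D1"
    using assms(1-3) by (simp add: field_simps)
  also have "Q*(1-q*Q) + (1-Q) = D1" using assms(4) by (simp add: algebra_simps)
  finally show ?thesis using assms(1) by simp
qed

context lqp
begin

definition sq :: "nat \<Rightarrow> real" where "sq n = (\<Prod>i<n. q^(i+1))"
lemma sq0[simp]: "sq 0 = 1" by (simp add: sq_def)
lemma sq_Suc: "sq (Suc n) = sq n * q^(n+1)" by (simp add: sq_def)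
lemma sq_pos: "0 < sq n" unfolding sq_def by (rule prod_pos) (use qpos in blast)

lemma I0_key: assumes m: "m \<ge> 1"
  shows "lqa q m * (q^m * (1 + q*q^m)) + lqc q m * (1 + q^m) = q^m * (1+q)"
proof -
  have Q0: "0 < q^m" "q^m < 1" using qlt1[of m] m by auto
  have qQ: "q*q^m < 1" using mult_left_le[of "q^m" q] Q0 q0 q1 by linarith
  have "q*q^m*q^m \<le> q*q^m" using Q0 q0 by (intro mult_left_le) auto
  then have qQQ: "q*q^m*q^m < 1" using qQ by linarith
  have p: "0 < q*q^m" using q0 by simp
  have p2: "0 < 1 + q^m" using qpos[of m] by linarith
  show ?thesis unfolding lqa_form[OF m] lqc_form[OF m]
    using gen_I0[of "1 - q*q^m*q^m" "1 + q*q^m" "1 + q^m" q "q^m"] qQQ p Q0 p2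
    by (simp add: mult.assoc)
qed

lemma R_at0: "R n 0 = (-1)^n * sq n"
proof (induction n rule: less_induct)
  case (less n)
  show ?case
  proof (cases "n \<le> 1")
    case True
    then consider "n = 0" | "n = 1" by linarith
    then show ?thesis
    proof cases
      case 1 then show ?thesis by simp
    next
      case 2 then show ?thesis unfolding 2 R1 by (simp add: sq_def)
    qed
  next
    case False
    then obtain m where n: "n = Suc m" and m: "m \<ge> 1" by (cases n) auto
    obtain p where mp: "m = Suc p" using m by (cases m) auto
    have IH1: "R m 0 = (-1)^m * sq m" using less.IH n by simp
    have IH2: "R (m-1) 0 = (-1)^p * sq p" using less.IH n mp by simp
    have "lqa q m * R (Suc m) 0 = (R 1 0 - lqb q m) * R m 0 - lqc q m * R (m-1) 0"
      using Rrec[OF m] by simp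
    also have "\<dots> = (-1)^p * sq p * ((q + lqb q m) * q^m - lqc q m)"
      unfolding R1 IH1 IH2 by (simp add: mp sq_Suc algebra_simps)
    also have "\<dots> = (-1)^p * sq p * (lqa q m * (q^m * (q * q^m)))"
    proof -
      have lb: "lqb q m = 1 - lqa q m - lqc q m" using abc_sum[OF m] by simp
      have "(q + lqb q m) * q^m - lqc q m = lqa q m * (q^m * (q * q^m))"
        using I0_key[OF m] unfolding lb by (simp add: algebra_simps)
      then show ?thesis by simp
    qed
    also have "\<dots> = lqa q m * ((-1)^(Suc m) * sq (Suc m))"
      unfolding mp by (simp add: sq_Suc algebra_simps)
    finally have eq: "lqa q m * R (Suc m) 0 = lqa q m * ((-1)^(Suc m) * sq (Suc m))" .
    have ne: "lqa q m \<noteq> 0" using lqa_pos[of m] by simp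
    from eq ne have "R (Suc m) 0 = (-1)^(Suc m) * sq (Suc m)" by (simp only: mult_cancel_left) simp
    then show ?thesis using n by simp
  qed
qed

end


lemma gen_enu: fixes x :: real assumes "x \<noteq> 0" "1 - x \<noteq> 0"
  shows "(-x/(1-x)^2) * (x - 2 + 1/x) = -1"
proof -
  have "x - 2 + 1/x = (1-x)^2/x" using assms by (simp add: field_simps power2_eq_square)
  then show ?thesis using assms by simp
qed

lemma gen_term: fixes q K T t L :: real assumes "q \<noteq> 0" "K \<noteq> 0"
  shows "(1 - q*t) * (K*T) - (2 - t - q*t) * T + (1 - t) * (T/K) + L * (t*T)
    = (K - 2 + 1/K) * T + (L - (1-K)*(1-q*K)/K) * (t*T)"
  using assms by (simp add: field_simps)

lemma polyT: fixes q J K :: real assumes "q \<noteq> 0" "K \<noteq> 0"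
  shows "(1-q*J)*(q*K*(J - 1/q)) - (2-J-q*J)*(J-K) - (J-q*K)*(J-K)/(q*K) + J*((1-q*K)*(1-q*(q*K))/(q*K))*(J-K) + J*(1-q*K)^2 = 0"
proof -
  have P: "(1-q*J)*(q*K)*K*(q*J-1) - (2-J-q*J)*(J-K)*(q*K) - (J-q*K)*(J-K) + J*(1-q*K)*(1-q*q*K)*(J-K) + J*(q*K)*(1-q*K)^2 = 0"
    by algebra
  have "(1-q*J)*(q*K*(J - 1/q)) - (2-J-q*J)*(J-K) - (J-q*K)*(J-K)/(q*K) + J*((1-q*K)*(1-q*(q*K))/(q*K))*(J-K) + J*(1-q*K)^2
    = ((1-q*J)*(q*K)*K*(q*J-1) - (2-J-q*J)*(J-K)*(q*K) - (J-q*K)*(J-K) + J*(1-q*K)*(1-q*q*K)*(J-K) + J*(q*K)*(1-q*K)^2) / (q*K)"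
    using assms by (simp add: field_simps)
  then show ?thesis using P by simp
qed

context lqp
begin

lemma cc_Suc: "cc n (Suc k) = cc n k * (-(q^(k+1))/(1-q^(k+1))^2) * (lam n - lam k)"
  unfolding cc_def U_Suc V_Suc Ek_Suc lam_diff by (simp only: mult_ac)

definition nu :: "nat \<Rightarrow> real" where "nu k = q^k - 2 + 1/q^k"

lemma e_nu: "(-(q^(k+1))/(1-q^(k+1))^2) * nu (Suc k) = -1"
  unfolding nu_def Suc_eq_plus1 by (rule gen_enu) (use qlt1[of "k+1"] in auto)

definition vv :: "nat \<Rightarrow> real \<Rightarrow> real" where "vv n t = (\<Sum>k\<le>n. cc n k * t^k)"

lemma vv_R: "vv n t = R n (1 - t)" by (simp add: vv_def tform)

lemma jrec: "(1 - q*t) * vv n (q*t) - (2 - t - q*t) * vv n t + (1 - t) * vv n (t/q) + lam n * t * vv n t = 0"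
proof -
  define w where "w k = cc n k * nu k * t^k" for k
  have termk: "cc n k * ((1 - q*t) * (q*t)^k - (2 - t - q*t) * t^k + (1 - t) * (t/q)^k + lam n * (t * t^k)) = w k - w (Suc k)" for k
  proof -
    have "(1 - q*t) * (q*t)^k - (2 - t - q*t) * t^k + (1 - t) * (t/q)^k + lam n * (t * t^k)
        = (1 - q*t) * (q^k*t^k) - (2 - t - q*t) * t^k + (1 - t) * (t^k/q^k) + lam n * (t * t^k)"
      by (simp add: power_mult_distrib power_divide)
    also have "\<dots> = nu k * t^k + (lam n - lam k) * (t * t^k)"
      using gen_term[of q "q^k" t "t^k" "lam n"] by (simp add: nu_def lam_def)
    finally have a: "(1 - q*t) * (q*t)^k - (2 - t - q*t) * t^k + (1 - t) * (t/q)^k + lam n * (t * t^k) = nu k * t^k + (lam n - lam k) * (t * t^k)" .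
    have b: "w (Suc k) = - (cc n k * (lam n - lam k) * (t * t^k))"
    proof -
      define E where "E = (-(q^(k+1))/(1-q^(k+1))^2)"
      have "w (Suc k) = cc n k * (lam n - lam k) * (t * t^k) * (E * nu (Suc k))"
        unfolding w_def cc_Suc E_def[symmetric] by (simp add: algebra_simps)
      then show ?thesis unfolding E_def e_nu by simp
    qed
    show ?thesis unfolding a b by (simp add: w_def algebra_simps)
  qed
  have "(1 - q*t) * vv n (q*t) - (2 - t - q*t) * vv n t + (1 - t) * vv n (t/q) + lam n * t * vv n t
      = (\<Sum>k\<le>n. cc n k * ((1 - q*t) * (q*t)^k - (2 - t - q*t) * t^k + (1 - t) * (t/q)^k + lam n * (t * t^k)))"
    unfolding vv_def by (simp add: sum_distrib_left sum.distrib sum_subtractf algebra_simps)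
  also have "\<dots> = (\<Sum>k\<le>n. w k - w (Suc k))" using termk by simp
  also have "\<dots> = w 0 - w (Suc n)" by (rule sum_telescope)
  also have "\<dots> = 0" by (simp add: w_def nu_def cc_zero)
  finally show ?thesis .
qed

definition Nk :: "nat \<Rightarrow> real \<Rightarrow> real" where "Nk k J = (\<Prod>i<k. J - q^i)"
definition Dk :: "nat \<Rightarrow> real" where "Dk k = (\<Prod>i<k. (1 - q^(i+1))^2)"
definition Bp :: "nat \<Rightarrow> real \<Rightarrow> real" where "Bp k L = (\<Prod>i<k. L - lam i)"
definition PiD :: "nat \<Rightarrow> real \<Rightarrow> real" where "PiD n J = (\<Sum>k\<le>n. Nk k J / Dk k * Bp k (lam n))"

lemma Dk_pos: "0 < Dk k"
  unfolding Dk_def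
proof (rule prod_pos)
  fix i assume "i \<in> {..<k}"
  have "q^(i+1) < 1" by (rule qlt1) simp
  then show "0 < (1 - q^(i+1))^2" by simp
qed
lemma Dk_Suc: "Dk (Suc k) = Dk k * (1 - q^(k+1))^2" by (simp add: Dk_def)
lemma Nk_Suc: "Nk (Suc k) J = Nk k J * (J - q^k)" by (simp add: Nk_def)
lemma Bp_Suc: "Bp (Suc k) L = Bp k L * (L - lam k)" by (simp add: Bp_def)
lemma Bp_zero: "n < k \<Longrightarrow> Bp k (lam n) = 0"
  unfolding Bp_def by (rule prod_zero) auto
lemma Nk0[simp]: "Nk 0 J = 1" by (simp add: Nk_def)
lemma Dk0[simp]: "Dk 0 = 1" by (simp add: Dk_def)
lemma Bp0[simp]: "Bp 0 L = 1" by (simp add: Bp_def)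

lemma N_up: "Nk (Suc k) (q*J) = q^(k+1) * (J - 1/q) * Nk k J"
proof (induction k)
  case 0 then show ?case by (simp add: Nk_def field_simps)
next
  case (Suc k)
  have "Nk (Suc (Suc k)) (q*J) = q^(k+1) * (J - 1/q) * Nk k J * (q*J - q^(Suc k))"
    using Suc by (simp add: Nk_Suc)
  also have "\<dots> = q^(Suc k+1) * (J - 1/q) * (Nk k J * (J - q^k))" by (simp add: algebra_simps)
  finally show ?case by (simp add: Nk_Suc)
qed

lemma N_down: "Nk k (J/q) * (J - 1) = (J - q^k) * Nk k J / q^k"
proof (induction k)
  case 0 then show ?case by simp
next
  case (Suc k)
  have "Nk (Suc k) (J/q) * (J - 1) = (Nk k (J/q) * (J - 1)) * (J/q - q^k)" by (simp add: Nk_Suc)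
  also have "\<dots> = (J - q^k) * Nk k J / q^k * (J/q - q^k)" using Suc by simp
  also have "\<dots> = (J - q^(Suc k)) * (Nk k J * (J - q^k)) / q^(Suc k)" by (simp add: field_simps)
  finally show ?case by (simp add: Nk_Suc)
qed

lemma dual_term: "(1-q*J) * Nk k (q*J) - (2-J-q*J) * Nk k J + (1-J) * Nk k (J/q) + J * lam k * Nk k J
    + J * (if k = 0 then 0 else (1 - q^k)^2 * Nk (k-1) J) = 0"
proof (cases k)
  case 0 then show ?thesis by simp
next
  case (Suc k')
  define K where "K = q^k'"
  define G where "G = Nk k' J"
  have K0: "K \<noteq> 0" by (simp add: K_def)
  have a: "Nk k (q*J) = q*K*(J - 1/q) * G" using N_up[of k' J] by (simp add: Suc K_def G_def)
  have b: "Nk k J = (J - K) * G" by (simp add: Suc Nk_Suc K_def G_def)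
  have c: "(1-J) * Nk k (J/q) = - ((J - q*K) * ((J-K)*G) / (q*K))"
  proof -
    have "(1-J) * Nk k (J/q) = - (Nk k (J/q) * (J - 1))" by (simp add: algebra_simps)
    also have "\<dots> = - ((J - q^k) * Nk k J / q^k)" by (simp add: N_down)
    finally have "(1-J) * Nk k (J/q) = - ((J - q^k) * Nk k J / q^k)" .
    then show ?thesis unfolding b by (simp add: Suc K_def)
  qed
  have d: "lam k = (1-q*K)*(1-q*(q*K))/(q*K)" by (simp add: lam_def Suc K_def)
  have e: "(if k = 0 then 0 else (1 - q^k)^2 * Nk (k-1) J) = (1-q*K)^2 * G" by (simp add: Suc K_def G_def)
  have "(1-q*J) * Nk k (q*J) - (2-J-q*J) * Nk k J + (1-J) * Nk k (J/q) + J * lam k * Nk k J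
    + J * (if k = 0 then 0 else (1 - q^k)^2 * Nk (k-1) J)
    = G * ((1-q*J)*(q*K*(J - 1/q)) - (2-J-q*J)*(J-K) - (J-q*K)*(J-K)/(q*K) + J*((1-q*K)*(1-q*(q*K))/(q*K))*(J-K) + J*(1-q*K)^2)"
    unfolding a b c d e by (simp add: algebra_simps)
  also have "\<dots> = 0" using polyT[OF qne K0] by simp
  finally show ?thesis .
qed

lemma PiD_rec: "(1 - q*J) * PiD n (q*J) - (2 - J - q*J) * PiD n J + (1 - J) * PiD n (J/q) + lam n * J * PiD n J = 0"
proof -
  define B where "B k = Bp k (lam n)" for k
  define Di where "Di k = 1 / Dk k" for k
  have PA: "PiD n X = (\<Sum>k\<le>n. Nk k X * Di k * B k)" for X
    unfolding PiD_def B_def Di_def by simp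
  have lamB: "lam n * B k = B (Suc k) + lam k * B k" for k by (simp add: B_def Bp_Suc algebra_simps)
  have sh: "(\<Sum>k\<le>n. Nk k J * Di k * B (Suc k)) = (\<Sum>k\<le>n. (if k = 0 then 0 else Nk (k-1) J * Di (k-1)) * B k)"
  proof -
    have "(\<Sum>k\<le>Suc n. (if k = 0 then 0 else Nk (k-1) J * Di (k-1)) * B k) = (\<Sum>k\<le>n. Nk k J * Di k * B (Suc k))"
      by (subst sum.atMost_Suc_shift) simp
    moreover have "(\<Sum>k\<le>Suc n. (if k = 0 then 0 else Nk (k-1) J * Di (k-1)) * B k) = (\<Sum>k\<le>n. (if k = 0 then 0 else Nk (k-1) J * Di (k-1)) * B k)"
      by (simp add: B_def Bp_zero)
    ultimately show ?thesis by simp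
  qed
  have Dprev: "(if k = 0 then 0 else Nk (k-1) J * Di (k-1)) = (if k = 0 then 0 else (1 - q^k)^2 * Nk (k-1) J) * Di k" for k
  proof (cases k)
    case 0 then show ?thesis by simp
  next
    case (Suc k')
    have "Dk k' \<noteq> 0" "1 - q^k \<noteq> 0" using Dk_pos[of k'] qlt1[of k] Suc by auto
    then show ?thesis by (simp add: Suc Dk_Suc Di_def field_simps)
  qed
  have "(1 - q*J) * PiD n (q*J) - (2 - J - q*J) * PiD n J + (1 - J) * PiD n (J/q) + lam n * J * PiD n J
     = (\<Sum>k\<le>n. B k * Di k * ((1-q*J) * Nk k (q*J) - (2-J-q*J) * Nk k J + (1-J) * Nk k (J/q) + J * lam k * Nk k J))
       + J * (\<Sum>k\<le>n. Nk k J * Di k * B (Suc k))"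
  proof -
    have "lam n * J * PiD n J = (\<Sum>k\<le>n. J * Nk k J * Di k * (lam n * B k))"
      unfolding PA by (simp add: sum_distrib_left algebra_simps)
    also have "\<dots> = (\<Sum>k\<le>n. B k * Di k * (J * lam k * Nk k J)) + J * (\<Sum>k\<le>n. Nk k J * Di k * B (Suc k))"
      unfolding lamB by (simp add: sum_distrib_left sum.distrib algebra_simps)
    finally have l: "lam n * J * PiD n J = (\<Sum>k\<le>n. B k * Di k * (J * lam k * Nk k J)) + J * (\<Sum>k\<le>n. Nk k J * Di k * B (Suc k))" .
    show ?thesis unfolding l unfolding PA
      by (simp add: sum_distrib_left sum.distrib sum_subtractf algebra_simps)
  qed
  also have "\<dots> = (\<Sum>k\<le>n. B k * Di k * ((1-q*J) * Nk k (q*J) - (2-J-q*J) * Nk k J + (1-J) * Nk k (J/q) + J * lam k * Nk k J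
      + J * (if k = 0 then 0 else (1 - q^k)^2 * Nk (k-1) J)))"
  proof -
    have "J * (\<Sum>k\<le>n. Nk k J * Di k * B (Suc k)) = (\<Sum>k\<le>n. B k * Di k * (J * (if k = 0 then 0 else (1 - q^k)^2 * Nk (k-1) J)))"
      unfolding sh Dprev by (simp add: sum_distrib_left algebra_simps)
    then show ?thesis by (simp add: sum.distrib[symmetric] algebra_simps)
  qed
  also have "\<dots> = 0" by (simp add: dual_term)
  finally show ?thesis .
qed

end


context lqp
begin

lemma rec_uniq:
  fixes F G :: "real \<Rightarrow> real" and L :: real
  assumes F: "\<And>t. (1 - q*t) * F (q*t) - (2 - t - q*t) * F t + (1 - t) * F (t/q) + L * t * F t = 0"
    and G: "\<And>t. (1 - q*t) * G (q*t) - (2 - t - q*t) * G t + (1 - t) * G (t/q) + L * t * G t = 0"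
    and FG1: "F 1 = G 1"
  shows "F (q^j) = G (q^j)"
proof (induction j rule: less_induct)
  case (less j)
  show ?case
  proof (cases j)
    case 0 then show ?thesis using FG1 by simp
  next
    case (Suc i)
    show ?thesis
    proof (cases i)
      case 0
      have nz: "1 - q \<noteq> 0" using q1 by simp
      have "(1 - q) * F q = (1 - q - L) * F 1" using F[of 1] by (simp add: algebra_simps)
      moreover have "(1 - q) * G q = (1 - q - L) * G 1" using G[of 1] by (simp add: algebra_simps)
      ultimately have "(1 - q) * F q = (1 - q) * G q" using FG1 by simp
      then show ?thesis using nz Suc 0 by simp
    next
      case (Suc i')
      define t where "t = q^i"
      have nz: "1 - q*t \<noteq> 0" using qlt1[of "Suc i"] by (simp add: t_def)
      have e1: "q*t = q^j" "t/q = q^i'" using \<open>j = Suc i\<close> Suc by (simp_all add: t_def)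
      have IH1: "F t = G t" using less.IH[of i] \<open>j = Suc i\<close> by (simp add: t_def)
      have IH2: "F (q^i') = G (q^i')" using less.IH[of i'] \<open>j = Suc i\<close> Suc by simp
      have "(1 - q*t) * F (q*t) = (1 - q*t) * G (q*t)"
        using F[of t] G[of t] IH1 IH2 e1 by (simp add: algebra_simps)
      then show ?thesis using nz e1 by simp
    qed
  qed
qed

lemma PiD_one: "PiD n 1 = 1"
proof -
  have "PiD n 1 = (\<Sum>k\<le>n. if k = 0 then 1 else 0)"
    unfolding PiD_def
  proof (rule sum.cong)
    fix k assume "k \<in> {..n}"
    show "Nk k 1 / Dk k * Bp k (lam n) = (if k = 0 then 1 else 0)"
    proof (cases k)
      case 0 then show ?thesis by simp
    next
      case (Suc k')
      have "Nk k 1 = 0" unfolding Nk_def Suc by (rule prod_zero) (auto intro: bexI[of _ 0])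
      then show ?thesis using Suc by simp
    qed
  qed simp
  then show ?thesis by simp
qed

lemma link: "R n (1 - q^j) = R n 0 * PiD n (q^j)"
proof -
  have "vv n (q^j) = (\<lambda>J. R n 0 * PiD n J) (q^j)"
  proof (rule rec_uniq[where L = "lam n"])
    show "(1 - q*t) * vv n (q*t) - (2 - t - q*t) * vv n t + (1 - t) * vv n (t/q) + lam n * t * vv n t = 0" for t
      by (rule jrec)
    show "(1 - q*t) * (R n 0 * PiD n (q*t)) - (2 - t - q*t) * (R n 0 * PiD n t) + (1 - t) * (R n 0 * PiD n (t/q)) + lam n * t * (R n 0 * PiD n t) = 0" for t
    proof -
      have "(1 - q*t) * (R n 0 * PiD n (q*t)) - (2 - t - q*t) * (R n 0 * PiD n t) + (1 - t) * (R n 0 * PiD n (t/q)) + lam n * t * (R n 0 * PiD n t)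
        = R n 0 * ((1 - q*t) * PiD n (q*t) - (2 - t - q*t) * PiD n t + (1 - t) * PiD n (t/q) + lam n * t * PiD n t)"
        by (simp add: algebra_simps)
      then show ?thesis using PiD_rec[of t n] by simp
    qed
    show "vv n 1 = R n 0 * PiD n 1" by (simp add: vv_R PiD_one)
  qed
  then show ?thesis by (simp add: vv_R)
qed

end


context lqp
begin

lemma qge0[simp]: "0 \<le> q^n" using qpos[of n] by linarith
lemma qmul_pos[simp]: "0 < q * q^n" using q0 by simp
lemma qmul_ge0[simp]: "0 \<le> q * q^n" using qmul_pos[of n] by linarith

lemma geo_le: "(\<Sum>i\<le>m. q^i) \<le> 1/(1-q)"
proof -
  have "(\<Sum>i\<le>m. q^i) = (1 - q^Suc m)/(1-q)" using q1 by (simp add: sum_gp0)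
  also have "\<dots> \<le> 1/(1-q)" using q1 qge0[of "Suc m"] by (intro divide_right_mono) auto
  finally show ?thesis .
qed

lemma geo_lt: "(\<Sum>i<m. q^i) \<le> 1/(1-q)"
proof -
  have "(\<Sum>i<m. q^i) = (1 - q^m)/(1-q)" using q1 by (simp add: sum_gp_strict)
  also have "\<dots> \<le> 1/(1-q)" using q1 by (intro divide_right_mono) auto
  finally show ?thesis .
qed

lemma geo_rev: "(\<Sum>k\<le>m. q^(m-k)) \<le> 1/(1-q)"
proof -
  have "(\<Sum>k\<le>m. q^(m-k)) = (\<Sum>k\<le>m. q^k)"
    using sum.atLeastAtMost_rev[of "\<lambda>k. q^(m-k)" 0 m] by (simp add: atMost_atLeast0)
  then show ?thesis using geo_le by simp
qed

lemma exp_bound: assumes "0 \<le> x" "x \<le> q" shows "exp (- x/(1-q)) \<le> 1 - x"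
proof -
  have x1: "x < 1" using assms q1 by simp
  have "1 + x/(1-x) \<le> exp (x/(1-x))" by (rule exp_ge_add_one_self)
  moreover have "1 + x/(1-x) = 1/(1-x)" using x1 by (simp add: field_simps)
  ultimately have a: "1/(1-x) \<le> exp (x/(1-x))" by simp
  have "exp (- (x/(1-x))) = 1 / exp (x/(1-x))" by (simp add: exp_minus field_simps)
  also have "\<dots> \<le> 1 / (1/(1-x))" using a x1 by (intro divide_left_mono) auto
  also have "\<dots> = 1 - x" by simp
  finally have b: "exp (- (x/(1-x))) \<le> 1 - x" .
  have "0 < (1-x)*(1-q)" using x1 q1 by (intro mult_pos_pos) auto
  then have "x/(1-x) \<le> x/(1-q)" using assms x1 by (intro divide_left_mono) auto
  then have "exp (- x/(1-q)) \<le> exp (- (x/(1-x)))" by simp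
  then show ?thesis using b by linarith
qed

definition kap :: real where "kap = exp (- 2 / (1-q)^2)"

lemma kap_pos: "0 < kap" by (simp add: kap_def)

lemma Dk_lower: "kap \<le> Dk k"
proof -
  have main: "exp (- 2 * (\<Sum>i<k. q^(i+1)) / (1-q)) \<le> Dk k" for k
  proof (induction k)
    case 0 then show ?case by simp
  next
    case (Suc k)
    have x: "0 \<le> q^(k+1)" "q^(k+1) \<le> q" using q0 q1 by (auto simp: power_le_one mult_left_le)
    have e1: "exp (-(q^(k+1))/(1-q)) \<le> 1 - q^(k+1)" by (rule exp_bound[OF x])
    have "exp (-(q^(k+1))/(1-q)) * exp (-(q^(k+1))/(1-q)) \<le> (1 - q^(k+1)) * (1 - q^(k+1))"
      using e1 qle1[of "k+1"] by (intro mult_mono) auto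
    then have e2: "exp (- 2 * (q^(k+1))/(1-q)) \<le> (1 - q^(k+1))^2"
      by (simp add: exp_add[symmetric] power2_eq_square)
    have "- 2 * (\<Sum>i<Suc k. q^(i+1)) / (1-q) = - 2 * (\<Sum>i<k. q^(i+1)) / (1-q) + - 2 * (q^(k+1))/(1-q)"
      by (simp add: add_divide_distrib[symmetric] algebra_simps)
    then have "exp (- 2 * (\<Sum>i<Suc k. q^(i+1)) / (1-q)) = exp (- 2 * (\<Sum>i<k. q^(i+1)) / (1-q)) * exp (- 2 * (q^(k+1))/(1-q))"
      by (simp add: exp_add[symmetric])
    also have "\<dots> \<le> Dk k * (1 - q^(k+1))^2"
      using Suc e2 Dk_pos[of k] by (intro mult_mono) auto
    finally show ?case by (simp add: Dk_Suc)
  qed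
  have s: "(\<Sum>i<k. q^(i+1)) \<le> 1/(1-q)"
  proof -
    have "(\<Sum>i<k. q^(i+1)) = q * (\<Sum>i<k. q^i)" by (simp add: sum_distrib_left)
    also have "\<dots> \<le> 1 * (1/(1-q))" using geo_lt[of k] q0 q1 by (intro mult_mono) (auto intro: sum_nonneg)
    finally show ?thesis by simp
  qed
  have "- 2 / (1-q)^2 \<le> - 2 * (\<Sum>i<k. q^(i+1)) / (1-q)"
  proof -
    have "2 * (\<Sum>i<k. q^(i+1)) / (1-q) \<le> 2 * (1/(1-q)) / (1-q)"
      using s q1 by (intro divide_right_mono mult_left_mono) auto
    then show ?thesis by (simp add: power2_eq_square)
  qed
  then have "kap \<le> exp (- 2 * (\<Sum>i<k. q^(i+1)) / (1-q))" unfolding kap_def by simp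
  then show ?thesis using main[of k] by linarith
qed

lemma qpow_mono: "a \<le> b \<Longrightarrow> q^b \<le> q^a"
  using q0 q1 by (intro power_decreasing) auto

lemma Nk_zero: "j < k \<Longrightarrow> Nk k (q^j) = 0"
  unfolding Nk_def by (rule prod_zero) (auto intro: bexI[of _ j])

lemma Nk_bound: assumes "k \<le> j" shows "\<bar>Nk k (q^j)\<bar> \<le> (\<Prod>i<k. q^i)"
proof -
  have "\<bar>Nk k (q^j)\<bar> = (\<Prod>i<k. \<bar>q^j - q^i\<bar>)" unfolding Nk_def by (simp add: abs_prod)
  also have "\<dots> \<le> (\<Prod>i<k. q^i)"
  proof (rule prod_mono)
    fix i assume "i \<in> {..<k}"
    then have "q^j \<le> q^i" using assms by (intro qpow_mono) auto
    then show "0 \<le> \<bar>q^j - q^i\<bar> \<and> \<bar>q^j - q^i\<bar> \<le> q^i" by simp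
  qed
  finally show ?thesis .
qed

lemma Bp_bound: assumes "k \<le> n" shows "\<bar>Bp k (lam n)\<bar> \<le> (1/q^n)^k"
proof -
  have "\<bar>Bp k (lam n)\<bar> = (\<Prod>i<k. \<bar>lam n - lam i\<bar>)" unfolding Bp_def by (simp add: abs_prod)
  also have "\<dots> \<le> (\<Prod>i<k. 1/q^n)"
  proof (rule prod_mono)
    fix i assume "i \<in> {..<k}"
    then have "q^n \<le> q^i" using assms by (intro qpow_mono) auto
    then have a: "0 \<le> 1/q^n - 1/q^i" "1/q^n - 1/q^i \<le> 1/q^n" by (auto simp: field_simps)
    have b: "0 \<le> 1 - q^(n+i+1)" "1 - q^(n+i+1) \<le> 1" using qle1[of "n+i+1"] by auto
    have "0 \<le> (1/q^n - 1/q^i) * (1 - q^(n+i+1))" using a b by simp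
    moreover have "(1/q^n - 1/q^i) * (1 - q^(n+i+1)) \<le> (1/q^n) * 1" using a b by (intro mult_mono) auto
    ultimately show "0 \<le> \<bar>lam n - lam i\<bar> \<and> \<bar>lam n - lam i\<bar> \<le> 1/q^n" unfolding lam_diff by simp
  qed
  also have "\<dots> = (1/q^n)^k" by simp
  finally show ?thesis .
qed

lemma sq_comb: "k \<le> n \<Longrightarrow> sq n * (\<Prod>i<k. q^i) * (1/q^n)^k = sq (n-k)"
proof (induction k)
  case 0 then show ?case by simp
next
  case (Suc k)
  then have IH: "sq n * (\<Prod>i<k. q^i) * (1/q^n)^k = sq (n-k)" by simp
  obtain d where d: "n - k = Suc d" using Suc.prems by (metis Suc_diff_le Suc_le_lessD diff_Suc_Suc less_imp_le)
  have dd: "n - Suc k = d" using d by simp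
  have "sq n * (\<Prod>i<Suc k. q^i) * (1/q^n)^(Suc k) = (sq n * (\<Prod>i<k. q^i) * (1/q^n)^k) * (q^k / q^n)"
    by (simp add: field_simps)
  also have "\<dots> = sq (Suc d) * (q^k / q^n)" using IH d by simp
  also have "\<dots> = sq d * (q^(d+1) * q^k / q^n)" by (simp add: sq_Suc)
  also have "q^(d+1) * q^k = q^n"
  proof -
    have "n = (d+1) + k" using d Suc.prems by arith
    then show ?thesis by (simp only: power_add)
  qed
  finally show ?case using dd by simp
qed

lemma sq_bound: "q * sq d \<le> q^(2*d)"
proof (induction d)
  case 0 then show ?case using q1 by simp
next
  case (Suc d)
  show ?case
  proof (cases d)
    case 0 then show ?thesis by (simp add: sq_Suc power2_eq_square)
  next
    case (Suc d')
    have "q * sq (Suc d) = (q * sq d) * q^(d+1)" by (simp add: sq_Suc)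
    also have "\<dots> \<le> q^(2*d) * q^(d+1)" using Suc.IH by (intro mult_right_mono) auto
    also have "\<dots> = q^(2*d + (d+1))" by (rule power_add[symmetric])
    also have "\<dots> \<le> q^(2 * Suc d)" using Suc by (intro qpow_mono) auto
    finally show ?thesis .
  qed
qed

definition Kb :: real where "Kb = 1 / (kap * q * (1-q))"

lemma Kb_pos: "0 < Kb" using kap_pos q0 q1 by (simp add: Kb_def)

lemma R_bound: "\<bar>R n (1 - q^j)\<bar> \<le> Kb * q^(2*(n-j))"
proof -
  define m where "m = min n j"
  have "\<bar>R n (1 - q^j)\<bar> = sq n * \<bar>PiD n (q^j)\<bar>"
    unfolding link R_at0 using sq_pos[of n] by (simp add: abs_mult power_abs)
  also have "\<dots> \<le> sq n * (\<Sum>k\<le>n. \<bar>Nk k (q^j)\<bar> / Dk k * \<bar>Bp k (lam n)\<bar>)"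
  proof -
    have "\<bar>PiD n (q^j)\<bar> \<le> (\<Sum>k\<le>n. \<bar>Nk k (q^j) / Dk k * Bp k (lam n)\<bar>)"
      unfolding PiD_def by (rule sum_abs)
    also have "\<dots> = (\<Sum>k\<le>n. \<bar>Nk k (q^j)\<bar> / Dk k * \<bar>Bp k (lam n)\<bar>)"
      using Dk_pos by (simp add: abs_mult abs_of_pos)
    finally show ?thesis using sq_pos[of n] by (intro mult_left_mono) auto
  qed
  also have "\<dots> = (\<Sum>k\<le>n. sq n * (\<bar>Nk k (q^j)\<bar> / Dk k * \<bar>Bp k (lam n)\<bar>))"
    by (simp add: sum_distrib_left)
  also have "\<dots> \<le> (\<Sum>k\<le>n. (if k \<le> m then q^(2*(n-j)) * q^(m-k) / (q * kap) else 0))"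
  proof (rule sum_mono)
    fix k assume kn: "k \<in> {..n}"
    show "sq n * (\<bar>Nk k (q^j)\<bar> / Dk k * \<bar>Bp k (lam n)\<bar>) \<le> (if k \<le> m then q^(2*(n-j)) * q^(m-k) / (q * kap) else 0)"
    proof (cases "k \<le> m")
      case False
      then have "j < k" using kn by (auto simp: m_def)
      then show ?thesis using False by (simp add: Nk_zero)
    next
      case True
      then have kj: "k \<le> j" and kn': "k \<le> n" by (auto simp: m_def)
      have "sq n * (\<bar>Nk k (q^j)\<bar> / Dk k * \<bar>Bp k (lam n)\<bar>) \<le> sq n * ((\<Prod>i<k. q^i) / kap * (1/q^n)^k)"
      proof (intro mult_left_mono mult_mono divide_mono)
        show "\<bar>Nk k (q^j)\<bar> \<le> (\<Prod>i<k. q^i)" by (rule Nk_bound[OF kj])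
        show "\<bar>Bp k (lam n)\<bar> \<le> (1/q^n)^k" by (rule Bp_bound[OF kn'])
        show "kap \<le> Dk k" by (rule Dk_lower)
      qed (use kap_pos sq_pos[of n] prod_nonneg[of "{..<k}" "\<lambda>i. q^i"] in auto)
      also have "\<dots> = sq (n-k) / kap" using sq_comb[OF kn'] by (simp add: field_simps)
      also have "\<dots> \<le> q^(2*(n-k)) / (q * kap)"
        using sq_bound[of "n-k"] kap_pos q0 by (simp add: field_simps)
      also have "\<dots> \<le> q^(2*(n-j)) * q^(m-k) / (q * kap)"
      proof -
        have "2*(n-j) + (m-k) \<le> 2*(n-k)" using True by (auto simp: m_def)
        then have "q^(2*(n-k)) \<le> q^(2*(n-j) + (m-k))" by (rule qpow_mono)
        then show ?thesis using kap_pos q0 by (simp add: power_add divide_right_mono)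
      qed
      finally show ?thesis using True by simp
    qed
  qed
  also have "\<dots> = q^(2*(n-j)) / (q * kap) * (\<Sum>k\<le>m. q^(m-k))"
  proof -
    have "(\<Sum>k\<le>n. (if k \<le> m then q^(2*(n-j)) * q^(m-k) / (q * kap) else 0)) = (\<Sum>k\<le>m. q^(2*(n-j)) * q^(m-k) / (q * kap))"
      by (rule sum.mono_neutral_cong_right) (auto simp: m_def)
    then show ?thesis by (simp add: sum_distrib_left sum_divide_distrib)
  qed
  also have "\<dots> \<le> q^(2*(n-j)) / (q * kap) * (1/(1-q))"
    using geo_rev[of m] kap_pos q0 by (intro mult_left_mono) auto
  also have "\<dots> = Kb * q^(2*(n-j))" by (simp add: Kb_def field_simps)
  finally show ?thesis .
qed

end


context lqp
begin

lemma h_form: "lqh q n = (1 - q^(2*n+1)) / ((1-q) * q^n)"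
  by (simp add: lqh_def field_simps)

lemma h_pos: "0 < lqh q n"
proof -
  have "q^(2*n+1) < 1" by (rule qlt1) simp
  then show ?thesis using q1 by (simp add: h_form)
qed

lemma h_ge1: "1 \<le> lqh q n"
proof -
  have "q^(2*n+1) \<le> q^1" by (rule qpow_mono) simp
  then have a: "1 - q \<le> 1 - q^(2*n+1)" by simp
  have b: "(1-q) * q^n \<le> 1 - q" using q1 qle1[of n] by (simp add: mult_left_le)
  have "0 < (1-q) * q^n" using q1 by simp
  then have "(1-q) * q^n \<le> 1 - q^(2*n+1)" using a b by linarith
  then show ?thesis unfolding h_form using \<open>0 < (1-q) * q^n\<close> by (simp add: field_simps)
qed

lemma h_le: "lqh q n \<le> 1 / ((1-q) * q^n)"
proof -
  have "0 < (1-q) * q^n" using q1 by simp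
  moreover have "1 - q^(2*n+1) \<le> 1" by simp
  ultimately show ?thesis unfolding h_form by (intro divide_right_mono) auto
qed

lemma sum_g1: "(\<Sum>n<N. (if n < j then q^(j-n) else 0)) \<le> 1/(1-q)"
proof -
  have "(\<Sum>n<N. (if n < j then q^(j-n) else 0)) \<le> (\<Sum>n<max N j. (if n < j then q^(j-n) else 0))"
    by (rule sum_mono2) auto
  also have "\<dots> = (\<Sum>n<j. (if n < j then q^(j-n) else 0))"
    by (rule sum.mono_neutral_right) auto
  also have "\<dots> = (\<Sum>n<j. q^(j-n))" by simp
  also have "\<dots> = (\<Sum>i<j. q^(Suc i))"
    using sum.nat_diff_reindex[of "\<lambda>n. q^(j-n)" j, symmetric] by (simp add: Suc_diff_Suc)
  also have "\<dots> \<le> (\<Sum>i<j. q^i)" by (intro sum_mono qpow_mono) auto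
  also have "\<dots> \<le> 1/(1-q)" by (rule geo_lt)
  finally show ?thesis .
qed

lemma sum_g2: "(\<Sum>n<N. (if j \<le> n then q^(n-j) else 0)) \<le> 1/(1-q)"
proof -
  have "(\<Sum>n<N. (if j \<le> n then q^(n-j) else 0)) \<le> (\<Sum>n<N+j. (if j \<le> n then q^(n-j) else 0))"
    by (rule sum_mono2) auto
  also have "\<dots> = (\<Sum>n\<in>{j..<N+j}. q^(n-j))"
    by (rule sum.mono_neutral_cong_right) auto
  also have "\<dots> = (\<Sum>i\<in>{0..<N}. q^i)"
    using sum.shift_bounds_nat_ivl[of "\<lambda>n. q^(n-j)" 0 j N] by simp
  also have "\<dots> \<le> 1/(1-q)" using geo_lt[of N] by (simp add: atLeast0LessThan)
  finally show ?thesis .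
qed

lemma sum_dist: "(\<Sum>n<N. q^((n-j)+(j-n))) \<le> 2/(1-q)"
proof -
  have "(\<Sum>n<N. q^((n-j)+(j-n))) = (\<Sum>n<N. (if n < j then q^(j-n) else 0)) + (\<Sum>n<N. (if j \<le> n then q^(n-j) else 0))"
    by (simp add: sum.distrib[symmetric]) (rule sum.cong, auto)
  also have "\<dots> \<le> 1/(1-q) + 1/(1-q)" using sum_g1 sum_g2 by (rule add_mono)
  finally show ?thesis by simp
qed

definition ww :: "nat \<Rightarrow> real" where "ww j = (1-q) * q^j"
definition yy :: "nat \<Rightarrow> real" where "yy j = 1 - q^j"

definition Cu :: real where "Cu = 2 * Kb / (1-q)"

lemma u_term: "\<bar>ww j * R n (yy j)\<bar> * lqh q n \<le> Kb * q^((n-j)+(j-n))"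
proof -
  have "\<bar>ww j * R n (yy j)\<bar> * lqh q n \<le> ((1-q) * q^j) * (Kb * q^(2*(n-j))) * (1 / ((1-q) * q^n))"
  proof -
    have "\<bar>ww j * R n (yy j)\<bar> = ((1-q) * q^j) * \<bar>R n (1 - q^j)\<bar>"
      using q1 by (simp add: ww_def yy_def abs_mult)
    moreover have "((1-q) * q^j) * \<bar>R n (1 - q^j)\<bar> \<le> ((1-q) * q^j) * (Kb * q^(2*(n-j)))"
      using R_bound[of n j] q1 by (intro mult_left_mono) auto
    moreover have "0 \<le> ((1-q) * q^j) * (Kb * q^(2*(n-j)))" using Kb_pos q1 by simp
    ultimately show ?thesis using h_le[of n] h_pos[of n]
      by (metis abs_ge_zero less_eq_real_def mult_mono)
  qed
  also have "\<dots> = Kb * (q^j * q^(2*(n-j)) / q^n)" using q1 by (simp add: field_simps)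
  also have "q^j * q^(2*(n-j)) / q^n = q^((n-j)+(j-n))"
  proof (cases "n \<le> j")
    case True
    then have "j = (j - n) + n" by simp
    then have "q^j = q^(j-n) * q^n" by (metis power_add)
    then show ?thesis using True by simp
  next
    case False
    then have "q^j * q^(2*(n-j)) = q^(n-j) * q^n"
      by (simp add: power_add[symmetric]) (rule arg_cong[where f="\<lambda>x. q^x"], simp)
    then show ?thesis using False by simp
  qed
  finally show ?thesis by simp
qed

lemma u_norm: "(\<Sum>n<N. \<bar>ww j * R n (yy j)\<bar> * lqh q n) \<le> Cu"
proof -
  have "(\<Sum>n<N. \<bar>ww j * R n (yy j)\<bar> * lqh q n) \<le> (\<Sum>n<N. Kb * q^((n-j)+(j-n)))"
    by (rule sum_mono) (rule u_term)
  also have "\<dots> = Kb * (\<Sum>n<N. q^((n-j)+(j-n)))" by (simp add: sum_distrib_left)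
  also have "\<dots> \<le> Kb * (2/(1-q))" using sum_dist Kb_pos by (intro mult_left_mono) auto
  also have "\<dots> = Cu" by (simp add: Cu_def)
  finally show ?thesis .
qed

end


lemma smult_sum_right: "smult a (\<Sum>i\<in>S. f i) = (\<Sum>i\<in>S. smult a (f i))"
  by (induct S rule: infinite_finite_induct) (auto simp: smult_add_right)

context lqp
begin

abbreviation P :: "nat \<Rightarrow> real poly" where "P n \<equiv> lqR q n"

lemma lqa_nz: "lqa q m \<noteq> 0" using lqa_pos[of m] by simp

lemma P1_def: "P 1 = smult (1 / lqa q 0) [:- lqb q 0, 1:]" by simp

lemma P_rec: "m \<ge> 1 \<Longrightarrow> P 1 * P m = smult (lqa q m) (P (Suc m)) + smult (lqb q m) (P m) + smult (lqc q m) (P (m-1))"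
proof -
  assume "m \<ge> 1"
  then obtain k where m: "m = Suc k" by (cases m) auto
  have "P (Suc m) = smult (1 / lqa q m) (P 1 * P m - smult (lqb q m) (P m) - smult (lqc q m) (P (m-1)))"
    unfolding m by simp
  then have "smult (lqa q m) (P (Suc m)) = P 1 * P m - smult (lqb q m) (P m) - smult (lqc q m) (P (m-1))"
    using lqa_nz[of m] by simp
  then show ?thesis by (simp add: algebra_simps)
qed

lemma deg_P: "degree (P n) = n \<and> coeff (P n) n \<noteq> 0"
proof (induction n rule: less_induct)
  case (less n)
  show ?case
  proof (cases "n \<le> 1")
    case True
    then consider "n = 0" | "n = 1" by linarith
    then show ?thesis
    proof cases
      case 1 then show ?thesis by simp
    next
      case 2 then show ?thesis using lqa_nz[of 0] by (simp add: lqa_def)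
    qed
  next
    case False
    define m where "m = n - 2"
    have n: "n = Suc (Suc m)" using False by (simp add: m_def)
    have IH1: "degree (P (Suc m)) = Suc m" "coeff (P (Suc m)) (Suc m) \<noteq> 0" using less.IH[of "Suc m"] n by auto
    have IH0: "degree (P m) = m" using less.IH[of m] n by auto
    have d1: "degree (P 1) = 1" "coeff (P 1) 1 \<noteq> 0" using less.IH[of 1] n by auto
    define X where "X = P 1 * P (Suc m) - smult (lqb q (Suc m)) (P (Suc m)) - smult (lqc q (Suc m)) (P m)"
    have P1nz: "P 1 \<noteq> 0" using d1 by auto
    have Psnz: "P (Suc m) \<noteq> 0" using IH1 by auto
    have dm: "degree (P 1 * P (Suc m)) = Suc (Suc m)" using degree_mult_eq[OF P1nz Psnz] d1 IH1 by simp
    have cm: "coeff (P 1 * P (Suc m)) (Suc (Suc m)) = coeff (P 1) 1 * coeff (P (Suc m)) (Suc m)"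
      using coeff_mult_degree_sum[of "P 1" "P (Suc m)"] d1 IH1 by simp
    have c1: "coeff (smult (lqb q (Suc m)) (P (Suc m))) (Suc (Suc m)) = 0"
      using IH1 by (simp add: coeff_eq_0)
    have c2: "coeff (smult (lqc q (Suc m)) (P m)) (Suc (Suc m)) = 0"
      using IH0 by (simp add: coeff_eq_0)
    have cX: "coeff X (Suc (Suc m)) = coeff (P 1) 1 * coeff (P (Suc m)) (Suc m)"
      unfolding X_def coeff_diff cm c1 c2 by (simp del: lqR.simps)
    have cXnz: "coeff X (Suc (Suc m)) \<noteq> 0" using cX d1 IH1 by simp
    have dX: "degree X \<le> Suc (Suc m)"
      unfolding X_def using dm IH1 IH0
      by (intro degree_diff_le) (auto intro: order.trans[OF degree_smult_le])
    have dX': "degree X = Suc (Suc m)" using dX le_degree[OF cXnz] by simp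
    have PX: "P n = smult (1 / lqa q (Suc m)) X" unfolding n X_def by simp
    show ?thesis using dX' cXnz lqa_nz[of "Suc m"] n unfolding PX by simp
  qed
qed

lemma degP: "degree (P n) = n" using deg_P by blast
lemma leadP: "coeff (P n) n \<noteq> 0" using deg_P by blast

lemma coeff_P_zero: "n < i \<Longrightarrow> coeff (P n) i = 0"
  using degP[of n] by (simp add: coeff_eq_0)

lemma lin_indep: "(\<Sum>k\<le>N. smult (c k) (P k)) = 0 \<Longrightarrow> k \<le> N \<Longrightarrow> c k = 0"
proof (induction N arbitrary: k)
  case 0 then show ?case using leadP[of 0] by simp
next
  case (Suc N)
  have "coeff (\<Sum>k\<le>Suc N. smult (c k) (P k)) (Suc N) = c (Suc N) * coeff (P (Suc N)) (Suc N)"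
  proof -
    have "coeff (\<Sum>k\<le>Suc N. smult (c k) (P k)) (Suc N) = (\<Sum>k\<le>Suc N. c k * coeff (P k) (Suc N))"
      by (simp add: coeff_sum)
    also have "\<dots> = (\<Sum>k\<le>N. c k * coeff (P k) (Suc N)) + c (Suc N) * coeff (P (Suc N)) (Suc N)" by simp
    also have "(\<Sum>k\<le>N. c k * coeff (P k) (Suc N)) = 0" by (rule sum.neutral) (auto simp: coeff_P_zero)
    finally show ?thesis by simp
  qed
  then have "c (Suc N) * coeff (P (Suc N)) (Suc N) = 0" using Suc.prems(1) by (simp del: sum.atMost_Suc)
  then have cN: "c (Suc N) = 0" using leadP[of "Suc N"] by simp
  then have "(\<Sum>k\<le>N. smult (c k) (P k)) = 0" using Suc.prems(1) by simp
  then show ?case using Suc.IH[of k] Suc.prems(2) cN by (cases "k = Suc N") auto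
qed

lemma span_exists: "degree p \<le> N \<Longrightarrow> \<exists>c. p = (\<Sum>k\<le>N. smult (c k) (P k))"
proof (induction N arbitrary: p)
  case 0
  then have "p = [:coeff p 0:]" using degree_0_id[of p] by simp
  then have "p = smult (coeff p 0) (P 0)" by simp
  then show ?case by (intro exI[of _ "\<lambda>_. coeff p 0"]) simp
next
  case (Suc N)
  define d where "d = coeff p (Suc N) / coeff (P (Suc N)) (Suc N)"
  define p' where "p' = p - smult d (P (Suc N))"
  have "degree p' \<le> N"
  proof (rule degree_le, intro allI impI)
    fix i assume "N < i"
    show "coeff p' i = 0"
    proof (cases "i = Suc N")
      case True then show ?thesis using leadP[of "Suc N"] by (simp add: p'_def d_def)
    next
      case False
      then have "Suc N < i" using \<open>N < i\<close> by simp
      then show ?thesis using Suc.prems by (simp add: p'_def coeff_eq_0 coeff_P_zero)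
    qed
  qed
  then obtain c where c: "p' = (\<Sum>k\<le>N. smult (c k) (P k))" using Suc.IH by blast
  have "p = (\<Sum>k\<le>Suc N. smult ((c(Suc N := d)) k) (P k))"
  proof -
    have "(\<Sum>k\<le>N. smult ((c(Suc N := d)) k) (P k)) = (\<Sum>k\<le>N. smult (c k) (P k))"
      by (rule sum.cong) auto
    then show ?thesis using c by (simp add: p'_def algebra_simps)
  qed
  then show ?case by blast
qed

definition linprop :: "nat \<Rightarrow> nat \<Rightarrow> (nat \<Rightarrow> real) \<Rightarrow> bool" where
  "linprop m n c \<longleftrightarrow> (\<forall>k > m + n. c k = 0) \<and> P m * P n = (\<Sum>k\<le>m + n. smult (c k) (P k))"

lemma linprop_unique: assumes "linprop m n c" "linprop m n d" shows "c = d"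
proof
  fix k
  show "c k = d k"
  proof (cases "k \<le> m + n")
    case True
    have "(\<Sum>k\<le>m+n. smult (c k - d k) (P k)) = (\<Sum>k\<le>m+n. smult (c k) (P k)) - (\<Sum>k\<le>m+n. smult (d k) (P k))"
      by (simp add: smult_diff_left sum_subtractf)
    also have "\<dots> = 0" using assms by (simp add: linprop_def)
    finally have "c k - d k = 0" using lin_indep[of "\<lambda>k. c k - d k" "m+n" k] True by simp
    then show ?thesis by simp
  next
    case False then show ?thesis using assms by (simp add: linprop_def)
  qed
qed

lemma linprop_exists: "\<exists>c. linprop m n c"
proof -
  have "degree (P m * P n) \<le> m + n" using degree_mult_le[of "P m" "P n"] by (simp add: degP)
  then obtain c where c: "P m * P n = (\<Sum>k\<le>m+n. smult (c k) (P k))" using span_exists by blast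
  define c' where "c' k = (if k \<le> m + n then c k else 0)" for k
  have "linprop m n c'" unfolding linprop_def
  proof
    show "\<forall>k>m + n. c' k = 0" by (simp add: c'_def)
    show "P m * P n = (\<Sum>k\<le>m + n. smult (c' k) (P k))" unfolding c by (rule sum.cong) (auto simp: c'_def)
  qed
  then show ?thesis by blast
qed

lemma lqg_linprop: "linprop m n (lqg q m n)"
proof -
  have "lqg q m n = (THE c. linprop m n c)" unfolding lqg_def linprop_def by simp
  moreover have "\<exists>!c. linprop m n c" using linprop_exists linprop_unique by blast
  ultimately show ?thesis by (metis theI')
qed

lemma lqg_eq: "linprop m n c \<Longrightarrow> lqg q m n = c"
  using linprop_unique lqg_linprop by blast

lemma lqg_zero_above: "m + n < k \<Longrightarrow> lqg q m n k = 0"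
  using lqg_linprop by (simp add: linprop_def)

lemma lqg_expand: "P m * P n = (\<Sum>k\<le>m + n. smult (lqg q m n k) (P k))"
  using lqg_linprop by (simp add: linprop_def)

lemma lqg_sym: "lqg q m n = lqg q n m"
  by (rule lqg_eq) (use lqg_linprop[of n m] in \<open>simp add: linprop_def add.commute mult.commute\<close>)

lemma lqg_000: "lqg q 0 0 0 = 1"
proof -
  have "linprop 0 0 (\<lambda>k. if k = 0 then 1 else 0)" by (simp add: linprop_def)
  then show ?thesis using lqg_eq by fastforce
qed

lemma R_lin: "R m x * R n x = (\<Sum>k\<le>m + n. lqg q m n k * R k x)"
proof -
  have "R m x * R n x = poly (P m * P n) x" by simp
  also have "\<dots> = (\<Sum>k\<le>m + n. lqg q m n k * R k x)" unfolding lqg_expand by (simp add: poly_sum)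
  finally show ?thesis .
qed

end


context lqp
begin

definition spanab :: "nat \<Rightarrow> nat \<Rightarrow> real poly \<Rightarrow> bool" where
  "spanab a b p \<longleftrightarrow> (\<exists>c. (\<forall>k. (k < a \<or> b < k) \<longrightarrow> c k = 0) \<and> p = (\<Sum>k\<le>b. smult (c k) (P k)))"

lemma spanab_mono: assumes "spanab a b p" "a' \<le> a" "b \<le> b'" shows "spanab a' b' p"
proof -
  obtain c where c: "\<forall>k. (k < a \<or> b < k) \<longrightarrow> c k = 0" "p = (\<Sum>k\<le>b. smult (c k) (P k))"
    using assms(1) unfolding spanab_def by blast
  have "p = (\<Sum>k\<le>b'. smult (c k) (P k))"
    unfolding c(2) by (rule sum.mono_neutral_right[symmetric]) (use c(1) assms(3) in auto)
  then show ?thesis unfolding spanab_def using c(1) assms(2,3) by (intro exI[of _ c]) auto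
qed

lemma spanab_add: assumes "spanab a b p" "spanab a b p'" shows "spanab a b (p + p')"
proof -
  obtain c where c: "\<forall>k. (k < a \<or> b < k) \<longrightarrow> c k = 0" "p = (\<Sum>k\<le>b. smult (c k) (P k))"
    using assms(1) unfolding spanab_def by blast
  obtain d where d: "\<forall>k. (k < a \<or> b < k) \<longrightarrow> d k = 0" "p' = (\<Sum>k\<le>b. smult (d k) (P k))"
    using assms(2) unfolding spanab_def by blast
  have "p + p' = (\<Sum>k\<le>b. smult (c k + d k) (P k))"
    unfolding c(2) d(2) by (simp add: smult_add_left sum.distrib)
  then show ?thesis unfolding spanab_def using c(1) d(1) by (intro exI[of _ "\<lambda>k. c k + d k"]) auto
qed

lemma spanab_smult: assumes "spanab a b p" shows "spanab a b (smult x p)"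
proof -
  obtain c where c: "\<forall>k. (k < a \<or> b < k) \<longrightarrow> c k = 0" "p = (\<Sum>k\<le>b. smult (c k) (P k))"
    using assms(1) unfolding spanab_def by blast
  have "smult x p = (\<Sum>k\<le>b. smult (x * c k) (P k))"
    unfolding c(2) by (simp add: smult_sum_right)
  then show ?thesis unfolding spanab_def using c(1) by (intro exI[of _ "\<lambda>k. x * c k"]) auto
qed

lemma spanab_diff: "spanab a b p \<Longrightarrow> spanab a b p' \<Longrightarrow> spanab a b (p - p')"
  using spanab_add[of a b p "smult (-1) p'"] spanab_smult[of a b p' "-1"] by simp

lemma spanab_zero: "spanab a b 0"
  unfolding spanab_def by (intro exI[of _ "\<lambda>_. 0"]) simp

lemma spanab_sum: "finite S \<Longrightarrow> (\<And>k. k \<in> S \<Longrightarrow> spanab a b (f k)) \<Longrightarrow> spanab a b (\<Sum>k\<in>S. f k)"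
  by (induction S rule: finite_induct) (auto intro: spanab_add spanab_zero)

lemma spanab_P: "spanab k k (P k)"
proof -
  have "(\<Sum>i\<le>k. smult (if i = k then 1 else 0) (P i)) = (\<Sum>i\<le>k. if i = k then P i else 0)"
    by (rule sum.cong) auto
  also have "\<dots> = P k" by (simp add: sum.delta)
  finally show ?thesis unfolding spanab_def by (intro exI[of _ "\<lambda>i. if i = k then 1 else 0"]) auto
qed

lemma spanab_P1P: "spanab (k - 1) (k + 1) (P 1 * P k)"
proof (cases "k = 0")
  case True
  then show ?thesis using spanab_mono[OF spanab_P[of 1], of 0 1] by simp
next
  case False
  then have k: "k \<ge> 1" by simp
  have a: "spanab (k-1) (k+1) (P (Suc k))" using spanab_mono[OF spanab_P[of "Suc k"]] by simp
  have b: "spanab (k-1) (k+1) (P k)" using spanab_mono[OF spanab_P[of k]] by simp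
  have c: "spanab (k-1) (k+1) (P (k-1))" using spanab_mono[OF spanab_P[of "k-1"]] by simp
  show ?thesis unfolding P_rec[OF k]
    by (intro spanab_add spanab_smult a b c)
qed

lemma spanab_P1: assumes "spanab a b p" shows "spanab (a - 1) (b + 1) (P 1 * p)"
proof -
  obtain c where c: "\<forall>k. (k < a \<or> b < k) \<longrightarrow> c k = 0" "p = (\<Sum>k\<le>b. smult (c k) (P k))"
    using assms(1) unfolding spanab_def by blast
  have "P 1 * p = (\<Sum>k\<le>b. smult (c k) (P 1 * P k))"
    unfolding c(2) by (simp add: sum_distrib_left)
  also have "spanab (a - 1) (b + 1) \<dots>"
  proof (rule spanab_sum)
    fix k assume k: "k \<in> {..b}"
    show "spanab (a - 1) (b + 1) (smult (c k) (P 1 * P k))"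
    proof (cases "k < a")
      case True then show ?thesis using c(1) spanab_zero by simp
    next
      case False
      then show ?thesis using k by (intro spanab_smult spanab_mono[OF spanab_P1P]) auto
    qed
  qed simp
  finally show ?thesis .
qed

lemma spanab_prod: "n \<le> m \<Longrightarrow> spanab (m - n) (m + n) (P m * P n)"
proof (induction n rule: less_induct)
  case (less n)
  show ?case
  proof (cases "n \<le> 1")
    case True
    then consider "n = 0" | "n = 1" by linarith
    then show ?thesis
    proof cases
      case 1 then show ?thesis using spanab_P[of m] by simp
    next
      case 2 then show ?thesis using spanab_P1P[of m] by (simp add: mult.commute)
    qed
  next
    case False
    define k where "k = n - 2"
    have n: "n = Suc (Suc k)" using False by (simp add: k_def)
    have IH1: "spanab (m - Suc k) (m + Suc k) (P m * P (Suc k))" using less.IH[of "Suc k"] less.prems n by simp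
    have IH0: "spanab (m - k) (m + k) (P m * P k)" using less.IH[of k] less.prems n by simp
    have e: "P m * P n = smult (1 / lqa q (Suc k)) (P 1 * (P m * P (Suc k)) - smult (lqb q (Suc k)) (P m * P (Suc k)) - smult (lqc q (Suc k)) (P m * P k))"
      unfolding n by (simp add: algebra_simps)
    have t1: "spanab (m - n) (m + n) (P 1 * (P m * P (Suc k)))"
      using spanab_P1[OF IH1] less.prems n by (simp add: numeral_2_eq_2)
    have t2: "spanab (m - n) (m + n) (P m * P (Suc k))"
      using spanab_mono[OF IH1] n by simp
    have t3: "spanab (m - n) (m + n) (P m * P k)"
      using spanab_mono[OF IH0] n by simp
    show ?thesis unfolding e by (intro spanab_smult spanab_diff t1 t2 t3)
  qed
qed

lemma lqg_support: assumes "k < absdiff m n" shows "lqg q m n k = 0"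
proof -
  have main: "lqg q m n k = 0" if nm: "n \<le> m" and k: "k < m - n" for m n
  proof -
    obtain c where c: "\<forall>k. (k < m - n \<or> m + n < k) \<longrightarrow> c k = 0" "P m * P n = (\<Sum>k\<le>m + n. smult (c k) (P k))"
      using spanab_prod[OF nm] unfolding spanab_def by blast
    have "linprop m n c" unfolding linprop_def using c by auto
    then have "lqg q m n = c" by (rule lqg_eq)
    then show ?thesis using c(1) k by simp
  qed
  show ?thesis
  proof (cases "n \<le> m")
    case True then show ?thesis using main assms by (simp add: absdiff_def)
  next
    case False then show ?thesis using main[of m n] main[of n m] assms lqg_sym[of m n] by (simp add: absdiff_def)
  qed
qed

end


context lqp
begin

lemma vv_lim: "(\<lambda>J. vv n (q^J)) \<longlonglongrightarrow> 1"
proof -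
  have c: "isCont (vv n) 0" unfolding vv_def by (intro continuous_intros)
  have "(\<lambda>J. q^J) \<longlonglongrightarrow> 0" using q0 q1 by (intro LIMSEQ_power_zero) simp
  from isCont_tendsto_compose[OF c this] show ?thesis by (simp add: vv_def)
qed

lemma tele: "lam n * (\<Sum>j<Suc J. q^j * vv n (q^j)) = (q^(Suc J) - 1) * (vv n (q^(Suc J)) - vv n (q^J))"
proof (induction J)
  case 0
  have "(1 - q*1) * vv n (q*1) - (2 - 1 - q*1) * vv n 1 + (1 - 1) * vv n (1/q) + lam n * 1 * vv n 1 = 0"
    by (rule jrec)
  then show ?case by (simp add: algebra_simps)
next
  case (Suc J)
  define t where "t = q^(Suc J)"
  define A where "A = vv n (q*t)"
  define B where "B = vv n t"
  define C where "C = vv n (q^J)"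
  have E: "(1 - q*t) * A - (2 - t - q*t) * B + (1 - t) * C + lam n * t * B = 0"
    using jrec[of t n] by (simp add: A_def B_def C_def t_def)
  have IH: "lam n * (\<Sum>j<Suc J. q^j * vv n (q^j)) = (t - 1) * (B - C)"
    using Suc by (simp add: t_def B_def C_def)
  have "lam n * (\<Sum>j<Suc (Suc J). q^j * vv n (q^j)) = lam n * (\<Sum>j<Suc J. q^j * vv n (q^j)) + lam n * t * B"
    by (simp add: t_def B_def algebra_simps)
  also have "\<dots> = (t - 1) * (B - C) + lam n * t * B" using IH by simp
  also have "\<dots> = (q*t - 1) * (A - B)"
  proof -
    have "lam n * t * B = - ((1 - q*t) * A - (2 - t - q*t) * B + (1 - t) * C)" using E by linarith
    then show ?thesis by (simp add: algebra_simps)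
  qed
  finally show ?case by (simp add: t_def A_def B_def C_def)
qed

lemma lam_pos: "0 < n \<Longrightarrow> 0 < lam n"
  using qlt1[of n] qlt1[of "n+1"] by (simp add: lam_def)

lemma L_R: "(\<lambda>j. ww j * R n (yy j)) sums (if n = 0 then 1 else 0)"
proof (cases "n = 0")
  case True
  have "(\<lambda>j. q^j) sums (1 / (1 - q))" using q0 q1 by (intro geometric_sums) simp
  from sums_mult[OF this, of "1-q"] show ?thesis using True q1 by (simp add: ww_def)
next
  case False
  have ln: "lam n \<noteq> 0" using lam_pos[of n] False by simp
  define S where "S J = (\<Sum>j<Suc J. q^j * vv n (q^j))" for J
  define X where "X J = (q^(Suc J) - 1) * (vv n (q^(Suc J)) - vv n (q^J))" for J
  have SX: "S = (\<lambda>J. X J / lam n)"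
  proof
    fix J
    have "lam n * S J = X J" unfolding S_def X_def by (rule tele)
    then show "S J = X J / lam n" by (metis ln nonzero_mult_div_cancel_left)
  qed
  have "(\<lambda>J. X J / lam n) \<longlonglongrightarrow> (0 - 1) * (1 - 1) / lam n"
    unfolding X_def
  proof (intro tendsto_intros)
    show "(\<lambda>J. q^(Suc J)) \<longlonglongrightarrow> 0" using q0 q1 by (intro LIMSEQ_Suc LIMSEQ_power_zero) simp
    show "(\<lambda>J. vv n (q^(Suc J))) \<longlonglongrightarrow> 1" using LIMSEQ_Suc[OF vv_lim] by simp
    show "(\<lambda>J. vv n (q^J)) \<longlonglongrightarrow> 1" by (rule vv_lim)
  qed (use ln in simp)
  then have "S \<longlonglongrightarrow> 0" unfolding SX by simp
  then have "(\<lambda>J. (\<Sum>j<Suc J. q^j * vv n (q^j))) \<longlonglongrightarrow> 0" unfolding S_def .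
  then have "(\<lambda>N. (\<Sum>j<N. q^j * vv n (q^j))) \<longlonglongrightarrow> 0" by (rule LIMSEQ_imp_Suc)
  then have "(\<lambda>j. q^j * vv n (q^j)) sums 0" by (simp add: sums_def)
  from sums_mult[OF this, of "1-q"] show ?thesis
    using False by (simp add: ww_def yy_def vv_R mult.assoc)
qed

lemma L_RR: "(\<lambda>j. ww j * (R m (yy j) * R n (yy j))) sums (if m = n then lqg q m m 0 else 0)"
proof -
  have "(\<lambda>j. \<Sum>l\<le>m+n. lqg q m n l * (ww j * R l (yy j))) sums (\<Sum>l\<le>m+n. lqg q m n l * (if l = 0 then 1 else 0))"
    by (intro sums_sum sums_mult L_R)
  moreover have "(\<lambda>j. \<Sum>l\<le>m+n. lqg q m n l * (ww j * R l (yy j))) = (\<lambda>j. ww j * (R m (yy j) * R n (yy j)))"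
    by (rule ext) (simp add: R_lin sum_distrib_left algebra_simps)
  moreover have "(\<Sum>l\<le>m+n. lqg q m n l * (if l = 0 then 1 else 0)) = lqg q m n 0"
  proof -
    have "(\<Sum>l\<le>m+n. lqg q m n l * (if l = 0 then 1 else 0)) = (\<Sum>l\<le>m+n. if l = 0 then lqg q m n l else 0)"
      by (rule sum.cong) auto
    also have "\<dots> = lqg q m n 0" by (simp add: sum.delta)
    finally show ?thesis .
  qed
  moreover have "m \<noteq> n \<Longrightarrow> lqg q m n 0 = 0"
    by (rule lqg_support) (auto simp: absdiff_def)
  ultimately show ?thesis by (cases "m = n") auto
qed

lemma G_pos: "0 < lqg q m m 0"
proof -
  have s: "(\<lambda>j. ww j * (R m (yy j) * R m (yy j))) sums lqg q m m 0" using L_RR[of m m] by simp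
  have "0 < suminf (\<lambda>j. ww j * (R m (yy j) * R m (yy j)))"
  proof (rule suminf_pos2[of _ 0])
    show "summable (\<lambda>j. ww j * (R m (yy j) * R m (yy j)))" using s by (rule sums_summable)
    show "0 \<le> ww j * (R m (yy j) * R m (yy j))" for j using q1 by (simp add: ww_def)
    have "R m 0 \<noteq> 0" using sq_pos[of m] by (simp add: R_at0)
    then have "0 < R m 0 * R m 0" by (metis not_real_square_gt_zero)
    then show "0 < ww 0 * (R m (yy 0) * R m (yy 0))" using q1 by (simp add: ww_def yy_def)
  qed
  then show ?thesis using s by (simp add: sums_iff)
qed

end


context lqp
begin

lemma h0: "lqh q 0 = 1" using q1 by (simp add: lqh_def)

definition Sy :: "real \<Rightarrow> real" where "Sy y = (\<Sum>n. (R n y)^2 * lqh q n)"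
definition ey :: "real \<Rightarrow> nat \<Rightarrow> complex" where "ey y n = complex_of_real (R n y / Sy y)"

lemma lqT_lin: "lqT q n (\<lambda>l. complex_of_real (F l)) m = complex_of_real (\<Sum>l\<le>m + n. lqg q m n l * F l)"
proof -
  have "lqT q n (\<lambda>l. complex_of_real (F l)) m = complex_of_real (\<Sum>l = absdiff m n..m + n. lqg q m n l * F l)"
    unfolding lqT_def by simp
  also have "(\<Sum>l = absdiff m n..m + n. lqg q m n l * F l) = (\<Sum>l\<le>m + n. lqg q m n l * F l)"
    by (rule sum.mono_neutral_left) (auto simp: lqg_support)
  finally show ?thesis .
qed

lemma idem_y:
  assumes s1: "summable (\<lambda>n. \<bar>R n y\<bar> * lqh q n)" and s2: "summable (\<lambda>n. (R n y)^2 * lqh q n)"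
  shows "idempotent_l1 q (ey y)" and "0 < Sy y"
proof -
  show Spos: "0 < Sy y" unfolding Sy_def
  proof (rule suminf_pos2[OF s2, of 0])
    show "0 \<le> (R n y)^2 * lqh q n" for n using h_pos[of n] by simp
    show "0 < (R 0 y)^2 * lqh q 0" by (simp add: h0)
  qed
  have inl: "ey y \<in> l1h q"
  proof -
    have "summable (\<lambda>n. (1 / Sy y) * (\<bar>R n y\<bar> * lqh q n))" using s1 by (rule summable_mult)
    moreover have "norm (ey y k) * lqh q k = (1 / Sy y) * (\<bar>R k y\<bar> * lqh q k)" for k
      using Spos by (simp add: ey_def norm_divide)
    ultimately show ?thesis unfolding l1h_def by simp
  qed
  have conv: "lqconv q (ey y) (ey y) = ey y"
  proof
    fix n
    have T: "lqT q n (ey y) k = complex_of_real (R k y * R n y / Sy y)" for k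
    proof -
      have "lqT q n (ey y) k = complex_of_real (\<Sum>l\<le>k + n. lqg q k n l * (R l y / Sy y))"
        unfolding ey_def by (rule lqT_lin)
      also have "(\<Sum>l\<le>k + n. lqg q k n l * (R l y / Sy y)) = (\<Sum>l\<le>k + n. lqg q k n l * R l y) / Sy y"
        by (simp add: sum_divide_distrib)
      also have "\<dots> = R k y * R n y / Sy y" by (simp add: R_lin)
      finally show ?thesis .
    qed
    define c where "c = R n y / (Sy y)^2"
    have "(\<lambda>k. (R k y)^2 * lqh q k) sums Sy y" unfolding Sy_def using s2 by (rule summable_sums)
    then have "(\<lambda>k. c * ((R k y)^2 * lqh q k)) sums (c * Sy y)"
      by (rule sums_mult)
    then have A0: "(\<lambda>k. complex_of_real (c * ((R k y)^2 * lqh q k))) sums complex_of_real (c * Sy y)"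
      by (rule sums_of_real)
    have Ceq: "c * Sy y = R n y / Sy y" using Spos by (simp add: c_def power2_eq_square)
    have Ce: "complex_of_real (c * Sy y) = ey y n" unfolding ey_def Ceq ..
    from A0 have A: "(\<lambda>k. complex_of_real (c * ((R k y)^2 * lqh q k))) sums ey y n" by (simp only: Ce)
    have B: "(\<lambda>k. lqT q n (ey y) k * ey y k * complex_of_real (lqh q k)) = (\<lambda>k. complex_of_real (c * ((R k y)^2 * lqh q k)))"
      using Spos by (intro ext) (simp add: T ey_def c_def power2_eq_square field_simps)
    show "lqconv q (ey y) (ey y) n = ey y n" unfolding lqconv_def B using A by (rule sums_unique[symmetric])
  qed
  show "idempotent_l1 q (ey y)" unfolding idempotent_l1_def using inl conv by simp
qed

definition dl :: "nat \<Rightarrow> nat \<Rightarrow> complex" where "dl m k = (if k = m then 1 else 0)"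

lemma idem_d0: "idempotent_l1 q (dl 0)"
proof -
  have inl: "dl 0 \<in> l1h q" unfolding l1h_def dl_def mem_Collect_eq
    by (rule summable_finite[of "{0}"]) auto
  have "lqconv q (dl 0) (dl 0) n = dl 0 n" for n
  proof -
    have "(\<lambda>k. lqT q n (dl 0) k * dl 0 k * complex_of_real (lqh q k)) sums (lqT q n (dl 0) 0 * complex_of_real (lqh q 0))"
    proof -
      have "(\<lambda>k. lqT q n (dl 0) k * dl 0 k * complex_of_real (lqh q k)) = (\<lambda>k. if k = 0 then lqT q n (dl 0) 0 * complex_of_real (lqh q 0) else 0)"
        by (auto simp: dl_def)
      moreover have "(\<lambda>k. if k = 0 then lqT q n (dl 0) 0 * complex_of_real (lqh q 0) else 0) sums (lqT q n (dl 0) 0 * complex_of_real (lqh q 0))"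
        using sums_single[of 0 "\<lambda>_. lqT q n (dl 0) 0 * complex_of_real (lqh q 0)"] by simp
      ultimately show ?thesis by simp
    qed
    moreover have "lqT q n (dl 0) 0 = dl 0 n"
    proof -
      have "lqT q n (dl 0) 0 = (\<Sum>l = n..n. complex_of_real (lqg q 0 n l) * dl 0 l)"
        by (simp add: lqT_def absdiff_def)
      also have "\<dots> = complex_of_real (lqg q 0 n n) * dl 0 n" by simp
      also have "\<dots> = dl 0 n" by (cases "n = 0") (auto simp: dl_def lqg_000)
      finally show ?thesis .
    qed
    ultimately show ?thesis unfolding lqconv_def using h0 by (simp add: sums_iff)
  qed
  then show ?thesis unfolding idempotent_l1_def using inl by auto
qed

end


lemma sum_lessThan_add_split: "(\<Sum>i<a+(b::nat). f i) = (\<Sum>i<a. f i) + (\<Sum>i<b. f (a+i))"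
  by (induction b) (simp_all add: add.assoc)

context lqp
begin

lemma l1h_iff: "f \<in> l1h q \<longleftrightarrow> summable (\<lambda>k. norm (f k) * lqh q k)"
  by (simp add: l1h_def)

lemma l1h_add: assumes "f \<in> l1h q" "g \<in> l1h q" shows "(\<lambda>k. f k + g k) \<in> l1h q"
proof -
  have "summable (\<lambda>k. norm (f k) * lqh q k + norm (g k) * lqh q k)"
    using assms by (intro summable_add) (auto simp: l1h_iff)
  then show ?thesis unfolding l1h_iff
  proof (rule summable_comparison_test'[where N=0])
    fix k
    have "norm (f k + g k) * lqh q k \<le> (norm (f k) + norm (g k)) * lqh q k"
      using h_pos[of k] by (intro mult_right_mono norm_triangle_ineq) auto
    then show "norm (norm (f k + g k) * lqh q k) \<le> norm (f k) * lqh q k + norm (g k) * lqh q k"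
      using h_pos[of k] by (simp add: algebra_simps)
  qed
qed

lemma l1h_scale: assumes "f \<in> l1h q" shows "(\<lambda>k. c * f k) \<in> l1h q"
proof -
  have "summable (\<lambda>k. norm c * (norm (f k) * lqh q k))" using assms by (intro summable_mult) (simp add: l1h_iff)
  then show ?thesis unfolding l1h_iff by (simp add: norm_mult mult.assoc)
qed

lemma l1h_diff: "f \<in> l1h q \<Longrightarrow> g \<in> l1h q \<Longrightarrow> (\<lambda>k. f k - g k) \<in> l1h q"
  using l1h_add[of f "\<lambda>k. (-1) * g k"] l1h_scale[of g "-1"] by simp

lemma l1h_zero: "(\<lambda>k. 0) \<in> l1h q" by (simp add: l1h_iff)

lemma l1h_sum: "finite S \<Longrightarrow> (\<And>i. i \<in> S \<Longrightarrow> F i \<in> l1h q) \<Longrightarrow> (\<lambda>k. \<Sum>i\<in>S. F i k) \<in> l1h q"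
  by (induction S rule: finite_induct) (auto intro: l1h_add l1h_zero)

lemma norm1_nonneg: "f \<in> l1h q \<Longrightarrow> 0 \<le> norm1 q f"
  unfolding norm1_def l1h_iff
proof (rule suminf_nonneg)
  show "0 \<le> norm (f n) * lqh q n" for n using h_pos[of n] by simp
qed

lemma norm1_tri: assumes "f \<in> l1h q" "g \<in> l1h q" shows "norm1 q (\<lambda>k. f k + g k) \<le> norm1 q f + norm1 q g"
proof -
  have s: "summable (\<lambda>k. norm (f k) * lqh q k)" "summable (\<lambda>k. norm (g k) * lqh q k)"
    using assms by (auto simp: l1h_iff)
  have s2: "summable (\<lambda>k. norm (f k + g k) * lqh q k)" using l1h_add[OF assms] by (simp add: l1h_iff)
  have "norm1 q (\<lambda>k. f k + g k) \<le> (\<Sum>k. norm (f k) * lqh q k + norm (g k) * lqh q k)"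
    unfolding norm1_def
  proof (rule suminf_le)
    show "norm (f k + g k) * lqh q k \<le> norm (f k) * lqh q k + norm (g k) * lqh q k" for k
      using h_pos[of k] norm_triangle_ineq[of "f k" "g k"] by (simp add: distrib_right[symmetric] mult_right_mono)
  qed (use s s2 in \<open>auto intro: summable_add\<close>)
  also have "\<dots> = norm1 q f + norm1 q g" unfolding norm1_def using s by (rule suminf_add[symmetric])
  finally show ?thesis .
qed

lemma norm1_scale: assumes "f \<in> l1h q" shows "norm1 q (\<lambda>k. c * f k) = norm c * norm1 q f"
proof -
  have s: "summable (\<lambda>k. norm (f k) * lqh q k)" using assms by (simp add: l1h_iff)
  have "norm1 q (\<lambda>k. c * f k) = (\<Sum>k. norm c * (norm (f k) * lqh q k))"
    unfolding norm1_def by (simp add: norm_mult mult.assoc)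
  also have "\<dots> = norm c * norm1 q f" unfolding norm1_def using s by (rule suminf_mult)
  finally show ?thesis .
qed

lemma norm1_cong: "(\<And>k. norm (f k) = norm (g k)) \<Longrightarrow> norm1 q f = norm1 q g"
  unfolding norm1_def by simp

definition ispan :: "(nat \<Rightarrow> complex) \<Rightarrow> bool" where
  "ispan phi \<longleftrightarrow> (\<exists>N (c::nat\<Rightarrow>complex) (e::nat\<Rightarrow>nat\<Rightarrow>complex). (\<forall>i<N. idempotent_l1 q (e i)) \<and> phi = (\<lambda>k. \<Sum>i<N. c i * e i k))"

lemma ispan_l1h: "ispan phi \<Longrightarrow> phi \<in> l1h q"
  unfolding ispan_def idempotent_l1_def by (auto intro!: l1h_sum l1h_scale)

lemma ispan_zero: "ispan (\<lambda>k. 0)"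
  unfolding ispan_def by (intro exI[of _ 0]) simp

lemma ispan_idem: "idempotent_l1 q e \<Longrightarrow> ispan (\<lambda>k. c * e k)"
  unfolding ispan_def by (intro exI[of _ 1] exI[of _ "\<lambda>_. c"] exI[of _ "\<lambda>_. e"]) simp

lemma ispan_scale: assumes "ispan phi" shows "ispan (\<lambda>k. a * phi k)"
proof -
  obtain N and c :: "nat \<Rightarrow> complex" and e :: "nat \<Rightarrow> nat \<Rightarrow> complex" where "\<forall>i<N. idempotent_l1 q (e i)" "phi = (\<lambda>k. \<Sum>i<N. c i * e i k)"
    using assms unfolding ispan_def by force
  then show ?thesis unfolding ispan_def
    by (intro exI[of _ N] exI[of _ "\<lambda>i. a * c i"] exI[of _ e]) (simp add: sum_distrib_left mult.assoc)
qed

lemma ispan_add: assumes "ispan phi" "ispan psi" shows "ispan (\<lambda>k. phi k + psi k)"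
proof -
  obtain N and c :: "nat \<Rightarrow> complex" and e :: "nat \<Rightarrow> nat \<Rightarrow> complex" where 1: "\<forall>i<N. idempotent_l1 q (e i)" "phi = (\<lambda>k. \<Sum>i<N. c i * e i k)"
    using assms(1) unfolding ispan_def by force
  obtain M and d :: "nat \<Rightarrow> complex" and f :: "nat \<Rightarrow> nat \<Rightarrow> complex" where 2: "\<forall>i<M. idempotent_l1 q (f i)" "psi = (\<lambda>k. \<Sum>i<M. d i * f i k)"
    using assms(2) unfolding ispan_def by force
  define c' where "c' i = (if i < N then c i else d (i - N))" for i
  define e' where "e' i = (if i < N then e i else f (i - N))" for i
  have "\<forall>i<N+M. idempotent_l1 q (e' i)" using 1 2 by (auto simp: e'_def)
  moreover have "(\<lambda>k. phi k + psi k) = (\<lambda>k. \<Sum>i<N+M. c' i * e' i k)"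
    unfolding sum_lessThan_add_split 1 2 by (auto simp: c'_def e'_def)
  ultimately show ?thesis unfolding ispan_def by blast
qed

lemma ispan_sum: "finite S \<Longrightarrow> (\<And>i. i \<in> S \<Longrightarrow> ispan (F i)) \<Longrightarrow> ispan (\<lambda>k. \<Sum>i\<in>S. F i k)"
  by (induction S rule: finite_induct) (auto intro: ispan_add ispan_zero)

definition apx :: "(nat \<Rightarrow> complex) \<Rightarrow> bool" where
  "apx g \<longleftrightarrow> (\<forall>\<epsilon>>0. \<exists>phi. ispan phi \<and> norm1 q (\<lambda>k. g k - phi k) < \<epsilon>)"

lemma approx_scale: assumes "apx g" "g \<in> l1h q" shows "apx (\<lambda>k. a * g k)"
proof (cases "a = 0")
  case True
  then show ?thesis unfolding apx_def
    using ispan_zero by (intro allI impI exI[of _ "\<lambda>k. 0"]) (simp add: norm1_def)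
next
  case False
  show ?thesis unfolding apx_def
  proof (intro allI impI)
    fix \<epsilon> :: real assume e: "0 < \<epsilon>"
    then have "0 < \<epsilon> / norm a" using False by simp
    then obtain phi where p: "ispan phi" "norm1 q (\<lambda>k. g k - phi k) < \<epsilon> / norm a"
      using assms(1) unfolding apx_def by blast
    have "norm1 q (\<lambda>k. a * g k - a * phi k) = norm a * norm1 q (\<lambda>k. g k - phi k)"
      using norm1_scale[OF l1h_diff[OF assms(2) ispan_l1h[OF p(1)]], of a] by (simp add: algebra_simps)
    also have "\<dots> < \<epsilon>" using p(2) False by (simp add: field_simps)
    finally show "\<exists>psi. ispan psi \<and> norm1 q (\<lambda>k. a * g k - psi k) < \<epsilon>"
      using ispan_scale[OF p(1), of a] by blast
  qed
qed

lemma approx_add: assumes "apx g1" "apx g2" "g1 \<in> l1h q" "g2 \<in> l1h q" shows "apx (\<lambda>k. g1 k + g2 k)"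
  unfolding apx_def
proof (intro allI impI)
  fix \<epsilon> :: real assume e: "0 < \<epsilon>"
  obtain phi1 where p1: "ispan phi1" "norm1 q (\<lambda>k. g1 k - phi1 k) < \<epsilon>/2"
    using assms(1) e unfolding apx_def by (meson half_gt_zero)
  obtain phi2 where p2: "ispan phi2" "norm1 q (\<lambda>k. g2 k - phi2 k) < \<epsilon>/2"
    using assms(2) e unfolding apx_def by (meson half_gt_zero)
  have "norm1 q (\<lambda>k. g1 k + g2 k - (phi1 k + phi2 k)) = norm1 q (\<lambda>k. (g1 k - phi1 k) + (g2 k - phi2 k))"
    by (simp add: algebra_simps)
  also have "\<dots> \<le> norm1 q (\<lambda>k. g1 k - phi1 k) + norm1 q (\<lambda>k. g2 k - phi2 k)"
    by (rule norm1_tri) (use assms(3,4) ispan_l1h[OF p1(1)] ispan_l1h[OF p2(1)] in \<open>auto intro: l1h_diff\<close>)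
  also have "\<dots> < \<epsilon>" using p1(2) p2(2) by simp
  finally show "\<exists>phi. ispan phi \<and> norm1 q (\<lambda>k. g1 k + g2 k - phi k) < \<epsilon>"
    using ispan_add[OF p1(1) p2(1)] by blast
qed

lemma approx_zero: "apx (\<lambda>k. 0)"
  unfolding apx_def using ispan_zero by (intro allI impI exI[of _ "\<lambda>k. 0"]) (simp add: norm1_def)

lemma approx_sum: "finite S \<Longrightarrow> (\<And>i. i \<in> S \<Longrightarrow> apx (F i) \<and> F i \<in> l1h q) \<Longrightarrow> apx (\<lambda>k. \<Sum>i\<in>S. F i k)"
proof (induction S rule: finite_induct)
  case empty then show ?case using approx_zero by simp
next
  case (insert x S)
  have "apx (\<lambda>k. F x k + (\<Sum>i\<in>S. F i k))"
    using insert by (intro approx_add l1h_sum) auto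
  then show ?case using insert by simp
qed

lemma approx_limit: assumes "g \<in> l1h q" and "\<And>\<epsilon>. 0 < \<epsilon> \<Longrightarrow> \<exists>g'. apx g' \<and> g' \<in> l1h q \<and> norm1 q (\<lambda>k. g k - g' k) < \<epsilon>"
  shows "apx g"
  unfolding apx_def
proof (intro allI impI)
  fix \<epsilon> :: real assume e: "0 < \<epsilon>"
  obtain g' where g': "apx g'" "g' \<in> l1h q" "norm1 q (\<lambda>k. g k - g' k) < \<epsilon>/2"
    using assms(2) e by (meson half_gt_zero)
  obtain phi where p: "ispan phi" "norm1 q (\<lambda>k. g' k - phi k) < \<epsilon>/2"
    using g'(1) e unfolding apx_def by (meson half_gt_zero)
  have "norm1 q (\<lambda>k. g k - phi k) = norm1 q (\<lambda>k. (g k - g' k) + (g' k - phi k))" by simp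
  also have "\<dots> \<le> norm1 q (\<lambda>k. g k - g' k) + norm1 q (\<lambda>k. g' k - phi k)"
    by (rule norm1_tri) (use assms(1) g'(2) ispan_l1h[OF p(1)] in \<open>auto intro: l1h_diff\<close>)
  also have "\<dots> < \<epsilon>" using g'(3) p(2) by simp
  finally show "\<exists>phi. ispan phi \<and> norm1 q (\<lambda>k. g k - phi k) < \<epsilon>" using p(1) by blast
qed

end


context lqp
begin

definition UU :: "nat \<Rightarrow> nat \<Rightarrow> real" where "UU j n = ww j * R n (yy j)"
definition Km :: "nat \<Rightarrow> real" where "Km m = (\<Sum>k\<le>m. \<bar>cc m k\<bar>)"

lemma Km_nonneg: "0 \<le> Km m" unfolding Km_def by (rule sum_nonneg) simp

lemma a_bound: "\<bar>R m (yy j) - 1\<bar> \<le> Km m * q^j"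
proof -
  have "R m (yy j) - 1 = (\<Sum>k\<le>m. cc m k * ((q^j)^k - (if k = 0 then 1 else 0)))"
  proof -
    have "(\<Sum>k\<le>m. cc m k * (if k = 0 then 1 else 0)) = (\<Sum>k\<le>m. if k = 0 then cc m k else 0)"
      by (rule sum.cong) auto
    also have "\<dots> = 1" by (simp add: sum.delta)
    finally have "(\<Sum>k\<le>m. cc m k * (if k = 0 then 1 else 0)) = 1" .
    then show ?thesis unfolding yy_def tform by (simp add: right_diff_distrib sum_subtractf)
  qed
  also have "\<bar>\<dots>\<bar> \<le> (\<Sum>k\<le>m. \<bar>cc m k\<bar> * q^j)"
  proof -
    have "\<bar>\<Sum>k\<le>m. cc m k * ((q^j)^k - (if k = 0 then 1 else 0))\<bar> \<le> (\<Sum>k\<le>m. \<bar>cc m k * ((q^j)^k - (if k = 0 then 1 else 0))\<bar>)"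
      by (rule sum_abs)
    also have "\<dots> \<le> (\<Sum>k\<le>m. \<bar>cc m k\<bar> * q^j)"
    proof (rule sum_mono)
      fix k
      have "\<bar>(q^j)^k - (if k = 0 then 1 else 0)\<bar> \<le> q^j"
      proof (cases k)
        case 0 then show ?thesis by simp
      next
        case (Suc k')
        have "(q^j)^k \<le> q^j" unfolding power_mult[symmetric] using Suc by (intro qpow_mono) simp
        moreover have "0 \<le> (q^j)^k" by simp
        ultimately show ?thesis using Suc by simp
      qed
      then show "\<bar>cc m k * ((q^j)^k - (if k = 0 then 1 else 0))\<bar> \<le> \<bar>cc m k\<bar> * q^j"
        by (simp add: abs_mult mult_left_mono)
    qed
    finally show ?thesis .
  qed
  also have "\<dots> = Km m * q^j" by (simp add: Km_def sum_distrib_right)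
  finally show ?thesis .
qed

lemma UU_bound: "\<bar>UU j n\<bar> \<le> (1-q) * Kb * q^j"
proof -
  have "\<bar>R n (yy j)\<bar> \<le> Kb" using R_bound[of n j] Kb_pos qle1[of "2*(n-j)"]
    by (simp add: yy_def) (meson mult_left_le order_trans less_imp_le)
  then show ?thesis using q1 by (simp add: UU_def ww_def abs_mult mult_left_mono mult.commute mult.left_commute)
qed

lemma E_sums: "(\<lambda>i. (R m (yy (i+N)) - 1) * UU (i+N) n) sums
   ((if m = n then lqg q m m 0 else 0) - (if n = 0 then 1 else 0) - (\<Sum>j<N. (R m (yy j) - 1) * UU j n))"
proof -
  have "(\<lambda>j. R m (yy j) * UU j n - UU j n) sums ((if m = n then lqg q m m 0 else 0) - (if n = 0 then 1 else 0))"
  proof (rule sums_diff)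
    show "(\<lambda>j. R m (yy j) * UU j n) sums (if m = n then lqg q m m 0 else 0)"
      using L_RR[of m n] by (simp add: UU_def algebra_simps)
    show "(\<lambda>j. UU j n) sums (if n = 0 then 1 else 0)" using L_R[of n] by (simp add: UU_def)
  qed
  then have "(\<lambda>j. (R m (yy j) - 1) * UU j n) sums ((if m = n then lqg q m m 0 else 0) - (if n = 0 then 1 else 0))"
    by (simp add: algebra_simps)
  then show ?thesis using sums_iff_shift[of "\<lambda>j. (R m (yy j) - 1) * UU j n" N] by simp
qed

definition Ebd :: "nat \<Rightarrow> nat \<Rightarrow> real" where "Ebd m N = Cu * Km m * q^N / (1-q)"

lemma E_norm:
  fixes m N :: nat
  defines "E \<equiv> \<lambda>n. (if m = n then lqg q m m 0 else 0) - (if n = 0 then 1 else 0) - (\<Sum>j<N. (R m (yy j) - 1) * UU j n)"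
  shows "summable (\<lambda>n. \<bar>E n\<bar> * lqh q n)" and "(\<Sum>n. \<bar>E n\<bar> * lqh q n) \<le> Ebd m N"
proof -
  define A where "A i = \<bar>R m (yy (i+N)) - 1\<bar>" for i
  have A_le: "A i \<le> Km m * q^N * q^i" for i using a_bound[of m "i+N"] by (simp add: A_def power_add mult.commute mult.left_commute)
  have sg: "summable (\<lambda>i. Km m * q^N * q^i)" using q0 q1 by (intro summable_mult summable_geometric) simp
  have sA: "summable A" by (rule summable_comparison_test'[OF sg, of 0]) (use A_le in \<open>simp add: A_def\<close>)
  have sumA: "(\<Sum>i. A i) \<le> Km m * q^N / (1-q)"
  proof -
    have "(\<Sum>i. A i) \<le> (\<Sum>i. Km m * q^N * q^i)" by (rule suminf_le[OF A_le sA sg])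
    also have "\<dots> = Km m * q^N * (1/(1-q))" using q0 q1 by (simp add: suminf_mult suminf_geometric)
    finally show ?thesis by simp
  qed
  have term_sum: "summable (\<lambda>i. A i * \<bar>UU (i+N) n\<bar>)" for n
  proof (rule summable_comparison_test'[where N=0])
    show "summable (\<lambda>i. A i * ((1-q) * Kb))" using sA by (rule summable_mult2)
    show "norm (A i * \<bar>UU (i+N) n\<bar>) \<le> A i * ((1-q) * Kb)" for i
    proof -
      have "\<bar>UU (i+N) n\<bar> \<le> (1-q) * Kb" using UU_bound[of "i+N" n] qle1[of "i+N"] q1 Kb_pos
        by (meson mult_left_le order_trans less_imp_le mult_nonneg_nonneg diff_ge_0_iff_ge)
      then show ?thesis by (simp add: A_def abs_mult mult_left_mono)
    qed
  qed
  have Eabs: "\<bar>E n\<bar> \<le> (\<Sum>i. A i * \<bar>UU (i+N) n\<bar>)" for n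
  proof -
    have "E n = (\<Sum>i. (R m (yy (i+N)) - 1) * UU (i+N) n)" unfolding E_def using E_sums[of m N n] by (simp add: sums_iff)
    moreover have "\<bar>\<Sum>i. (R m (yy (i+N)) - 1) * UU (i+N) n\<bar> \<le> (\<Sum>i. \<bar>(R m (yy (i+N)) - 1) * UU (i+N) n\<bar>)"
      by (rule summable_rabs) (use term_sum[of n] in \<open>simp add: A_def abs_mult\<close>)
    ultimately show ?thesis by (simp add: A_def abs_mult)
  qed
  have partial: "(\<Sum>n<K. \<bar>E n\<bar> * lqh q n) \<le> Ebd m N" for K
  proof -
    have "(\<Sum>n<K. \<bar>E n\<bar> * lqh q n) \<le> (\<Sum>n<K. (\<Sum>i. A i * \<bar>UU (i+N) n\<bar>) * lqh q n)"
      by (intro sum_mono mult_right_mono Eabs) (use h_pos in \<open>auto intro: less_imp_le\<close>)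
    also have "\<dots> = (\<Sum>n<K. (\<Sum>i. A i * \<bar>UU (i+N) n\<bar> * lqh q n))"
      by (intro sum.cong refl) (rule suminf_mult2[OF term_sum])
    also have "\<dots> = (\<Sum>i. \<Sum>n<K. A i * \<bar>UU (i+N) n\<bar> * lqh q n)"
      by (rule suminf_sum[symmetric]) (intro summable_mult2 term_sum)
    also have "\<dots> \<le> (\<Sum>i. A i * Cu)"
    proof (rule suminf_le)
      show "(\<Sum>n<K. A i * \<bar>UU (i+N) n\<bar> * lqh q n) \<le> A i * Cu" for i
      proof -
        have "(\<Sum>n<K. A i * \<bar>UU (i+N) n\<bar> * lqh q n) = A i * (\<Sum>n<K. \<bar>ww (i+N) * R n (yy (i+N))\<bar> * lqh q n)"
          by (simp add: sum_distrib_left UU_def mult.assoc)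
        also have "\<dots> \<le> A i * Cu" using u_norm[of "i+N" K] by (intro mult_left_mono) (auto simp: A_def)
        finally show ?thesis .
      qed
      show "summable (\<lambda>i. \<Sum>n<K. A i * \<bar>UU (i+N) n\<bar> * lqh q n)"
        by (intro summable_sum summable_mult2 term_sum)
      show "summable (\<lambda>i. A i * Cu)" using sA by (rule summable_mult2)
    qed
    also have "\<dots> = (\<Sum>i. A i) * Cu" using sA by (rule suminf_mult2[symmetric])
    also have "\<dots> \<le> Km m * q^N / (1-q) * Cu"
      using sumA Kb_pos q1 by (intro mult_right_mono) (auto simp: Cu_def)
    also have "\<dots> = Ebd m N" by (simp add: Ebd_def field_simps)
    finally show ?thesis .
  qed
  show s: "summable (\<lambda>n. \<bar>E n\<bar> * lqh q n)"
  proof (rule summableI_nonneg_bounded[where x="Ebd m N"])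
    show "0 \<le> \<bar>E n\<bar> * lqh q n" for n using h_pos[of n] by simp
    show "(\<Sum>i<n. \<bar>E i\<bar> * lqh q i) \<le> Ebd m N" for n by (rule partial)
  qed
  show "(\<Sum>n. \<bar>E n\<bar> * lqh q n) \<le> Ebd m N" by (rule suminf_le_const[OF s partial])
qed

end


context lqp
begin

lemma ww_pos: "0 < ww j" using q1 by (simp add: ww_def)

lemma yy_s1: "summable (\<lambda>n. \<bar>R n (yy j)\<bar> * lqh q n)"
proof -
  have "summable (\<lambda>n. \<bar>ww j * R n (yy j)\<bar> * lqh q n)"
  proof (rule summableI_nonneg_bounded[where x=Cu])
    show "0 \<le> \<bar>ww j * R n (yy j)\<bar> * lqh q n" for n using h_pos[of n] by simp
    show "(\<Sum>i<n. \<bar>ww j * R i (yy j)\<bar> * lqh q i) \<le> Cu" for n by (rule u_norm)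
  qed
  then have A: "summable (\<lambda>n. (1 / ww j) * (\<bar>ww j * R n (yy j)\<bar> * lqh q n))" by (rule summable_mult)
  have eqf: "(\<lambda>n. (1 / ww j) * (\<bar>ww j * R n (yy j)\<bar> * lqh q n)) = (\<lambda>n. \<bar>R n (yy j)\<bar> * lqh q n)"
    by (rule ext) (use ww_pos[of j] in \<open>simp add: abs_mult\<close>)
  show ?thesis using A unfolding eqf .
qed

lemma R_yy_le: "\<bar>R n (yy j)\<bar> \<le> Kb"
  using R_bound[of n j] Kb_pos qle1[of "2*(n-j)"]
  by (simp add: yy_def) (meson mult_left_le order_trans less_imp_le)

lemma yy_s2: "summable (\<lambda>n. (R n (yy j))^2 * lqh q n)"
proof (rule summable_comparison_test'[where N=0])
  show "summable (\<lambda>n. Kb * (\<bar>R n (yy j)\<bar> * lqh q n))" using yy_s1 by (rule summable_mult)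
  show "norm ((R n (yy j))^2 * lqh q n) \<le> Kb * (\<bar>R n (yy j)\<bar> * lqh q n)" for n
  proof -
    have "(R n (yy j))^2 = \<bar>R n (yy j)\<bar> * \<bar>R n (yy j)\<bar>" by (simp add: power2_eq_square abs_mult[symmetric])
    also have "\<dots> \<le> Kb * \<bar>R n (yy j)\<bar>" using R_yy_le[of n j] by (intro mult_right_mono) auto
    finally show ?thesis using h_pos[of n] by (simp add: mult_right_mono mult.assoc)
  qed
qed

lemma idem_yy: "idempotent_l1 q (ey (yy j))" and Sy_yy: "0 < Sy (yy j)"
  using idem_y[OF yy_s1 yy_s2] by auto

lemma dl_l1h: "dl m \<in> l1h q"
  unfolding l1h_def dl_def mem_Collect_eq by (rule summable_finite[of "{m}"]) auto

lemma ispan_Phi: "ispan (\<lambda>k. complex_of_real (\<Sum>j<N. (R m (yy j) - 1) * UU j k) + dl 0 k)"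
proof -
  have eq: "complex_of_real (\<Sum>j<N. (R m (yy j) - 1) * UU j k)
      = (\<Sum>j<N. complex_of_real ((R m (yy j) - 1) * ww j * Sy (yy j)) * ey (yy j) k)" for k
  proof -
    have pj: "complex_of_real ((R m (yy j) - 1) * UU j k) = complex_of_real ((R m (yy j) - 1) * ww j * Sy (yy j)) * ey (yy j) k" for j
    proof -
      have "(R m (yy j) - 1) * UU j k = ((R m (yy j) - 1) * ww j * Sy (yy j)) * (R k (yy j) / Sy (yy j))"
        using Sy_yy[of j] by (simp add: UU_def)
      then show ?thesis unfolding ey_def by (simp only: of_real_mult)
    qed
    have "complex_of_real (\<Sum>j<N. (R m (yy j) - 1) * UU j k) = (\<Sum>j<N. complex_of_real ((R m (yy j) - 1) * UU j k))"
      by (rule of_real_sum)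
    also have "\<dots> = (\<Sum>j<N. complex_of_real ((R m (yy j) - 1) * ww j * Sy (yy j)) * ey (yy j) k)"
      by (rule sum.cong[OF refl pj])
    finally show ?thesis .
  qed
  have "ispan (\<lambda>k. (\<Sum>j<N. complex_of_real ((R m (yy j) - 1) * ww j * Sy (yy j)) * ey (yy j) k) + 1 * dl 0 k)"
    by (intro ispan_add ispan_sum ispan_idem idem_yy idem_d0) simp
  then show ?thesis unfolding eq by simp
qed

lemma approx_gm: "apx (\<lambda>k. complex_of_real (lqg q m m 0) * dl m k)"
  unfolding apx_def
proof (intro allI impI)
  fix \<epsilon> :: real assume e: "0 < \<epsilon>"
  have Cu_pos: "0 < Cu" using Kb_pos q1 by (simp add: Cu_def)
  define C where "C = Cu * Km m"
  have C0: "0 \<le> C" using Cu_pos Km_nonneg[of m] by (simp add: C_def)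
  have "0 < \<epsilon> * (1-q) / (C + 1)" using e q1 C0 by simp
  then obtain N where N: "q^N < \<epsilon> * (1-q) / (C + 1)" using real_arch_pow_inv q1 by blast
  have "Ebd m N < \<epsilon>"
  proof -
    have "Ebd m N = C * q^N / (1-q)" by (simp add: Ebd_def C_def)
    also have "\<dots> \<le> C * (\<epsilon> * (1-q) / (C + 1)) / (1-q)"
      using N C0 q1 by (intro divide_right_mono mult_left_mono) auto
    also have "\<dots> = \<epsilon> * (C / (C + 1))"
    proof -
      have gen: "\<And>a b. a \<noteq> 0 \<Longrightarrow> b \<noteq> 0 \<Longrightarrow> C * (\<epsilon> * a / b) / a = \<epsilon> * (C / b)"
        by (simp add: field_simps)
      show ?thesis using gen[of "1-q" "C+1"] q1 C0 by simp
    qed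
    also have "\<dots> < \<epsilon>" using C0 e by (simp add: field_simps)
    finally show ?thesis .
  qed
  define E where "E = (\<lambda>n. (if m = n then lqg q m m 0 else 0) - (if n = 0 then 1 else 0) - (\<Sum>j<N. (R m (yy j) - 1) * UU j n))"
  define \<phi> where "\<phi> = (\<lambda>k. complex_of_real (\<Sum>j<N. (R m (yy j) - 1) * UU j k) + dl 0 k)"
  have diff: "complex_of_real (lqg q m m 0) * dl m k - \<phi> k = complex_of_real (E k)" for k
    by (simp add: E_def \<phi>_def dl_def)
  have "norm1 q (\<lambda>k. complex_of_real (lqg q m m 0) * dl m k - \<phi> k) = (\<Sum>n. \<bar>E n\<bar> * lqh q n)"
    unfolding norm1_def diff by simp
  also have "\<dots> \<le> Ebd m N" using E_norm(2)[of m N] by (simp add: E_def)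
  finally have "norm1 q (\<lambda>k. complex_of_real (lqg q m m 0) * dl m k - \<phi> k) < \<epsilon>" using \<open>Ebd m N < \<epsilon>\<close> by simp
  moreover have "ispan \<phi>" unfolding \<phi>_def by (rule ispan_Phi)
  ultimately show "\<exists>\<phi>. ispan \<phi> \<and> norm1 q (\<lambda>k. complex_of_real (lqg q m m 0) * dl m k - \<phi> k) < \<epsilon>" by blast
qed

lemma approx_dl: "apx (dl m)"
proof -
  have G: "lqg q m m 0 \<noteq> 0" using G_pos[of m] by simp
  have "apx (\<lambda>k. complex_of_real (1 / lqg q m m 0) * (complex_of_real (lqg q m m 0) * dl m k))"
    by (rule approx_scale[OF approx_gm]) (rule l1h_scale[OF dl_l1h])
  moreover have "(\<lambda>k. complex_of_real (1 / lqg q m m 0) * (complex_of_real (lqg q m m 0) * dl m k)) = dl m"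
    using G by (intro ext) (simp add: of_real_divide field_simps)
  ultimately show ?thesis by simp
qed

lemma approx_all: assumes f: "f \<in> l1h q" shows "apx f"
proof (rule approx_limit[OF f])
  fix \<epsilon> :: real assume e: "0 < \<epsilon>"
  define x where "x = (\<lambda>k. norm (f k) * lqh q k)"
  have sx: "summable x" using f by (simp add: l1h_def x_def)
  obtain M where M: "\<forall>n\<ge>M. norm (\<Sum>i. x (i + n)) < \<epsilon>" using suminf_exist_split[OF e sx] by blast
  define g where "g = (\<lambda>k. \<Sum>m<M. f m * dl m k)"
  have ga: "apx g" unfolding g_def
    by (rule approx_sum) (auto intro: approx_scale approx_dl dl_l1h l1h_scale)
  have gl: "g \<in> l1h q" unfolding g_def by (rule l1h_sum) (auto intro: l1h_scale dl_l1h)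
  have fg: "f k - g k = (if k < M then 0 else f k)" for k
  proof -
    have "g k = (\<Sum>m<M. if m = k then f m else 0)" unfolding g_def by (rule sum.cong) (auto simp: dl_def)
    also have "\<dots> = (if k < M then f k else 0)" by (simp add: sum.delta')
    finally show ?thesis by simp
  qed
  have "norm1 q (\<lambda>k. f k - g k) = (\<Sum>k. if k < M then 0 else x k)"
    unfolding norm1_def fg x_def by (rule arg_cong[where f=suminf]) auto
  also have "\<dots> = (\<Sum>i. x (i + M))"
  proof -
    have "(\<lambda>i. x (i + M)) sums (\<Sum>i. x (i + M))" using sx by (intro summable_sums) (simp add: summable_iff_shift)
    then have "(\<lambda>i. (\<lambda>k. if k < M then 0 else x k) (i + M)) sums (\<Sum>i. x (i + M))" by simp
    then have "(\<lambda>k. if k < M then 0 else x k) sums ((\<Sum>i. x (i + M)) + (\<Sum>i<M. (if i < M then 0 else x i)))"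
      by (subst (asm) sums_iff_shift)
    then show ?thesis by (simp add: sums_iff)
  qed
  also have "\<dots> < \<epsilon>" using M by (metis order_refl real_norm_def abs_less_iff)
  finally show "\<exists>g'. apx g' \<and> g' \<in> l1h q \<and> norm1 q (\<lambda>k. f k - g' k) < \<epsilon>" using ga gl by blast
qed

end

theorem theorem3p1:
  fixes q :: real
  assumes "0 < q" and "q < 1"
  shows "\<forall>f \<in> l1h q. \<forall>\<epsilon> > 0. \<exists>(N::nat) (c :: nat \<Rightarrow> complex) (e :: nat \<Rightarrow> nat \<Rightarrow> complex).
           (\<forall>i < N. idempotent_l1 q (e i)) \<and>
           norm1 q (\<lambda>k. f k - (\<Sum>i<N. c i * e i k)) < \<epsilon>"
proof -
  interpret lqp q using assms by unfold_locales
  show ?thesis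
  proof (intro ballI allI impI)
    fix f and \<epsilon> :: real assume f: "f \<in> l1h q" and e: "0 < \<epsilon>"
    obtain \<phi> where p: "ispan \<phi>" "norm1 q (\<lambda>k. f k - \<phi> k) < \<epsilon>"
      using approx_all[OF f] e unfolding apx_def by blast
    obtain N and c :: "nat \<Rightarrow> complex" and ee :: "nat \<Rightarrow> nat \<Rightarrow> complex"
      where "\<forall>i<N. idempotent_l1 q (ee i)" "\<phi> = (\<lambda>k. \<Sum>i<N. c i * ee i k)"
      using p(1) unfolding ispan_def by force
    then show "\<exists>(N::nat) (c :: nat \<Rightarrow> complex) (e :: nat \<Rightarrow> nat \<Rightarrow> complex).
           (\<forall>i < N. idempotent_l1 q (e i)) \<and> norm1 q (\<lambda>k. f k - (\<Sum>i<N. c i * e i k)) < \<epsilon>"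
      using p(2) by blast
  qed
qed

end
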